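(* Let $k > 1$. Let $G$ be a group, $S \subset G$ a finite set of semigroup generators of $G$, $\Sigma$ a finite alphabet, $L \subseteq \Sigma^*$ a language and $\psi : L \to G$ a bijection such that: (i) for every $s \in S$ there is a function $f_s : \Sigma^* \to \Sigma^*$ computed on a $k$-tape Turing machine in linear time with $\psi(f_s(w)) = \psi(w)s$ for all $w \in L$; and (ii) $\psi$ is quasigeodesic, i.e. there is $C > 0$ such that $|w| \leqslant C(d_S(\psi(w)) + 1)$ for all $w \in L$. Then there is an algorithm which, given a word $g_1 \dots g_n$ with $g_i \in S$, computes the string $w \in L$ with $\psi(w) = g_1 \cdots g_n$ in time $O(n^2)$.
   Context: A $k$-tape Turing machine has $k$ semi-infinite tapes, each with the unmodifiable symbol $\boxplus$ in its leftmost cell (occurring only there); $\boxdot$ is the blank symbol, $\Sigma \cap \{\boxplus,\boxdot\} = \varnothing$, and the tape alphabet contains $\Sigma \cup \{\boxplus,\boxdot\}$. A function $f : \Sigma^* \to \Sigma^*$ is computed on a $k$-tape Turing machine in linear time if there is such a machine and a constant $C>0$ such that for every input $x \in \Sigma^*$ of length $n$, started with first tape $\boxplus x \boxdot^\infty$, the other tapes $\boxplus \boxdot^\infty$, all heads on $\boxplus$, the machine halts in an accepting state in at most $Cn$ steps with the first tape having prefix $\boxplus f(x) \boxdot$ (no restriction on the rest of the first tape or on the other tapes). For $g \in G$, $d_S(g)$ is the length of a shortest word $g_1 \dots g_m$, $g_i \in S$, with $g = g_1 \cdots g_m$ in $G$. *)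

theory Defs
  imports Complex_Main "HOL-Algebra.Group"
begin

datatype 'b tsym = Start | Blank | Sym 'b | Aux nat

record 'b tm =
  tm_k      :: nat
  tm_states :: "nat set"
  tm_aux    :: "nat set"
  tm_start  :: nat
  tm_halt   :: "nat set"
  tm_accept :: "nat set"
  tm_delta  :: "nat \<Rightarrow> 'b tsym list \<Rightarrow> nat \<times> 'b tsym list \<times> int list"

type_synonym 'b tm_config = "nat \<times> (nat \<Rightarrow> 'b tsym) list \<times> nat list"

definition tm_gamma :: "'b set \<Rightarrow> 'b tm \<Rightarrow> 'b tsym set" where
  "tm_gamma B M = {Start, Blank} \<union> Sym ` B \<union> Aux ` tm_aux M"

definition wf_tm :: "nat \<Rightarrow> 'b set \<Rightarrow> 'b tm \<Rightarrow> bool" where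
  "wf_tm k B M \<longleftrightarrow>
     tm_k M = k \<and> k \<ge> 1 \<and> finite B \<and> finite (tm_states M) \<and> finite (tm_aux M) \<and>
     tm_start M \<in> tm_states M \<and> tm_accept M \<subseteq> tm_halt M \<and> tm_halt M \<subseteq> tm_states M \<and>
     (\<forall>q \<in> tm_states M - tm_halt M. \<forall>rs.
        length rs = k \<and> set rs \<subseteq> tm_gamma B M \<longrightarrow>
        (case tm_delta M q rs of (q', ws, ms) \<Rightarrow>
           q' \<in> tm_states M \<and> length ws = k \<and> length ms = k \<and>
           set ws \<subseteq> tm_gamma B M \<and> set ms \<subseteq> {-1, 0, 1} \<and>
           (\<forall>i<k. (ws ! i = Start \<longleftrightarrow> rs ! i = Start) \<and>
                  (rs ! i = Start \<longrightarrow> ms ! i \<noteq> -1))))"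

fun tm_step :: "'b tm \<Rightarrow> 'b tm_config \<Rightarrow> 'b tm_config" where
  "tm_step M (q, ts, hs) =
     (if q \<in> tm_halt M then (q, ts, hs) else
      (let rs = map (\<lambda>i. (ts ! i) (hs ! i)) [0..<tm_k M] in
       case tm_delta M q rs of (q', ws, ms) \<Rightarrow>
         (q', map (\<lambda>i. (ts ! i)(hs ! i := ws ! i)) [0..<tm_k M],
              map (\<lambda>i. nat (int (hs ! i) + ms ! i)) [0..<tm_k M])))"

definition tm_run :: "'b tm \<Rightarrow> 'b tm_config \<Rightarrow> nat \<Rightarrow> 'b tm_config" where
  "tm_run M c t = (tm_step M ^^ t) c"

definition tm_init :: "'b tm \<Rightarrow> 'b list \<Rightarrow> 'b tm_config" where
  "tm_init M x =
     (tm_start M,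
      (\<lambda>i. if i = 0 then Start else if i \<le> length x then Sym (x ! (i - 1)) else Blank)
        # replicate (tm_k M - 1) (\<lambda>i. if i = 0 then Start else Blank),
      replicate (tm_k M) 0)"

definition tape_has_output :: "(nat \<Rightarrow> 'b tsym) \<Rightarrow> 'b list \<Rightarrow> bool" where
  "tape_has_output tp y \<longleftrightarrow>
     tp 0 = Start \<and> (\<forall>i < length y. tp (Suc i) = Sym (y ! i)) \<and> tp (Suc (length y)) = Blank"

definition tm_outputs_within :: "'b tm \<Rightarrow> 'b list \<Rightarrow> 'b list \<Rightarrow> real \<Rightarrow> bool" where
  "tm_outputs_within M x y T \<longleftrightarrow>
     (\<exists>t. real t \<le> T \<and>
        (case tm_run M (tm_init M x) t of (q, ts, hs) \<Rightarrow>
           q \<in> tm_accept M \<and> tape_has_output (hd ts) y))"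

definition linear_time_computable :: "nat \<Rightarrow> ('a::finite list \<Rightarrow> 'a list) \<Rightarrow> bool" where
  "linear_time_computable k f \<longleftrightarrow>
     (\<exists>M C. wf_tm k (UNIV :: 'a set) M \<and> C > 0 \<and>
        (\<forall>x. tm_outputs_within M x (f x) (C * (real (length x) + 1))))"

definition word_prod :: "('g, 'm) monoid_scheme \<Rightarrow> 'g list \<Rightarrow> 'g" where
  "word_prod G ws = foldr (\<lambda>x acc. x \<otimes>\<^bsub>G\<^esub> acc) ws \<one>\<^bsub>G\<^esub>"

definition semigroup_generates :: "('g, 'm) monoid_scheme \<Rightarrow> 'g set \<Rightarrow> bool" where
  "semigroup_generates G S \<longleftrightarrow> S \<subseteq> carrier G \<and>
     (\<forall>g \<in> carrier G. \<exists>ws. ws \<noteq> [] \<and> set ws \<subseteq> S \<and> word_prod G ws = g)"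

definition word_length :: "('g, 'm) monoid_scheme \<Rightarrow> 'g set \<Rightarrow> 'g \<Rightarrow> nat" where
  "word_length G S g = (LEAST m. \<exists>ws. length ws = m \<and> set ws \<subseteq> S \<and> word_prod G ws = g)"

end

theory Submission
  imports Defs
begin

datatype 'g inp = NoIn | Done | In 'g
datatype 'a vs = Fresh | Sim "'a tsym"
datatype ('a,'g) cell = CStart | Cell "'g inp" "'a vs" | Out 'a
datatype 'g st = Init nat | InitRet | Scan | RetS 'g | SimS 'g nat | CL nat | CE nat bool
  | CL2 nat | FinRet | FinW | Acc | Rej

definition act :: "'q \<Rightarrow> nat \<Rightarrow> 'c \<Rightarrow> int \<Rightarrow> (nat \<Rightarrow> 'c) \<Rightarrow> 'q \<times> (nat \<Rightarrow> 'c) \<times> (nat \<Rightarrow> int)" where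
  "act q j c m rs = (q, rs(j := c), (\<lambda>i. 0)(j := m))"
definition stay :: "'q \<Rightarrow> (nat \<Rightarrow> 'c) \<Rightarrow> 'q \<times> (nat \<Rightarrow> 'c) \<times> (nat \<Rightarrow> int)" where
  "stay q rs = (q, rs, \<lambda>i. 0)"

fun dec :: "('a,'g) cell \<Rightarrow> 'a tsym" where
  "dec CStart = Start" | "dec (Cell I Fresh) = Blank" | "dec (Cell I (Sim s)) = s" | "dec (Out a) = Blank"

fun inpof :: "('a,'g) cell \<Rightarrow> 'g inp" where "inpof (Cell I v) = I" | "inpof _ = NoIn"
fun vof :: "('a,'g) cell \<Rightarrow> 'a vs" where "vof (Cell I v) = v" | "vof _ = Fresh"

fun eraseF :: "('a,'g) cell \<Rightarrow> ('a,'g) cell" where "eraseF (Cell I v) = Cell I Fresh" | "eraseF c = c"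
fun outF :: "('a,'g) cell \<Rightarrow> ('a,'g) cell" where "outF (Cell I (Sim (Sym a))) = Out a" | "outF c = c"
fun isSymCell :: "('a,'g) cell \<Rightarrow> bool" where "isSymCell (Cell I (Sim (Sym a))) = True" | "isSymCell _ = False"
fun isSimCell :: "('a,'g) cell \<Rightarrow> bool" where "isSimCell (Cell I (Sim s)) = True" | "isSimCell _ = False"

definition halted :: "'g st \<Rightarrow> bool" where "halted q \<longleftrightarrow> q = Acc \<or> q = Rej"

lemma arun_add_gen: "((f::'c\<Rightarrow>'c) ^^ (a + b)) c = (f ^^ b) ((f ^^ a) c)"
  by (metis add.commute funpow_add o_apply)

lemma nat_p1: "nat (int p + 1) = Suc p" by simp
lemma nat_m1: "nat (int (Suc p) + -1) = p" by simp
lemma nat_p0: "nat (int p + 0) = p" by simp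

locale mach =
  fixes k :: nat and S :: "'g set" and Ms :: "'g \<Rightarrow> ('a::finite) tm" and w0 :: "'a list"
  assumes k1: "k \<ge> 1" and finS: "finite S" and wfM: "\<forall>g\<in>S. wf_tm k UNIV (Ms g)"
begin

definition lft :: "'g st \<Rightarrow> (nat \<times> 'g st) option" where
  "lft q = (case q of InitRet \<Rightarrow> Some (0, Scan) | RetS g \<Rightarrow> Some (0, SimS g (tm_start (Ms g)))
     | CL i \<Rightarrow> Some (i, CE i (i = 0)) | CL2 i \<Rightarrow> Some (i, if Suc i < k then CL (Suc i) else Scan)
     | FinRet \<Rightarrow> Some (0, FinW) | _ \<Rightarrow> None)"

definition simok :: "'g \<Rightarrow> 'a tsym list \<Rightarrow> nat \<times> 'a tsym list \<times> int list \<Rightarrow> bool" where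
  "simok g rl r = (case r of (q', wl, ml) \<Rightarrow>
      q' \<in> tm_states (Ms g) \<and> length wl = k \<and> length ml = k \<and> set wl \<subseteq> tm_gamma UNIV (Ms g) \<and>
      set ml \<subseteq> {-1,0,1} \<and> (\<forall>i<k. (wl!i = Start \<longleftrightarrow> rl!i = Start) \<and> (rl!i = Start \<longrightarrow> ml!i \<noteq> -1)))"

definition simstep :: "'g \<Rightarrow> nat \<Rightarrow> (nat \<Rightarrow> ('a,'g) cell) \<Rightarrow> 'g st \<times> (nat \<Rightarrow> ('a,'g) cell) \<times> (nat \<Rightarrow> int)" where
  "simstep g q rs = (let rl = map (\<lambda>i. dec (rs i)) [0..<k] in
     case tm_delta (Ms g) q rl of (q', wl, ml) \<Rightarrow>
     if simok g rl (q', wl, ml)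
     then (SimS g q', \<lambda>i. if i < k then (case rs i of Cell I v \<Rightarrow> Cell I (Sim (wl!i)) | c \<Rightarrow> c) else rs i,
           \<lambda>i. if i < k then ml!i else 0)
     else stay Rej rs)"

fun delta :: "'g st \<Rightarrow> (nat \<Rightarrow> ('a,'g) cell) \<Rightarrow> 'g st \<times> (nat \<Rightarrow> ('a,'g) cell) \<times> (nat \<Rightarrow> int)" where
  "delta (Init j) rs = (case rs 0 of CStart \<Rightarrow> act (Init j) 0 CStart 1 rs
      | Cell I v \<Rightarrow> if j < length w0 then act (Init (Suc j)) 0 (Cell I (Sim (Sym (w0!j)))) 1 rs
                   else stay InitRet rs
      | Out a \<Rightarrow> stay Rej rs)"
| "delta Scan rs = (case rs 0 of CStart \<Rightarrow> act Scan 0 CStart 1 rs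
      | Cell Done v \<Rightarrow> act Scan 0 (Cell Done v) 1 rs
      | Cell (In g) v \<Rightarrow> act (RetS g) 0 (Cell Done v) 0 rs
      | Cell NoIn v \<Rightarrow> stay FinRet rs
      | Out a \<Rightarrow> stay Rej rs)"
| "delta (SimS g q) rs = (if q \<in> tm_halt (Ms g) then stay (CL 0) rs else simstep g q rs)"
| "delta (CE i b) rs = (case rs i of CStart \<Rightarrow> act (CE i b) i CStart 1 rs
      | Cell I v \<Rightarrow> if b then (if isSymCell (Cell I v) then act (CE i True) i (Cell I v) 1 rs
                              else stay (CE i False) rs)
                   else (if v = Fresh then stay (CL2 i) rs else act (CE i False) i (Cell I Fresh) 1 rs)
      | Out a \<Rightarrow> stay Rej rs)"
| "delta FinW rs = (case rs 0 of CStart \<Rightarrow> act FinW 0 CStart 1 rs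
      | Cell I v \<Rightarrow> if isSymCell (Cell I v) then act FinW 0 (outF (Cell I v)) 1 rs
                   else act Acc 0 (Cell NoIn Fresh) 0 rs
      | Out a \<Rightarrow> stay Rej rs)"
| "delta Acc rs = stay Acc rs"
| "delta Rej rs = stay Rej rs"
| "delta q rs = (case lft q of Some (j, nx) \<Rightarrow>
       if rs j = CStart then stay nx rs else act q j (rs j) (-1) rs | None \<Rightarrow> stay Rej rs)"

definition rdv :: "(nat \<Rightarrow> nat \<Rightarrow> ('a,'g) cell) \<Rightarrow> (nat \<Rightarrow> nat) \<Rightarrow> nat \<Rightarrow> ('a,'g) cell" where
  "rdv T H = (\<lambda>i. if i < k then T i (H i) else CStart)"

fun astep :: "'g st \<times> (nat \<Rightarrow> nat \<Rightarrow> ('a,'g) cell) \<times> (nat \<Rightarrow> nat) \<Rightarrow> 'g st \<times> (nat \<Rightarrow> nat \<Rightarrow> ('a,'g) cell) \<times> (nat \<Rightarrow> nat)" where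
  "astep (q, T, H) = (if halted q then (q, T, H) else
     case delta q (rdv T H) of (q', ws, ms) \<Rightarrow>
       (q', \<lambda>i. if i < k then (T i)(H i := ws i) else T i,
            \<lambda>i. if i < k then nat (int (H i) + ms i) else H i))"

definition arun where "arun t c = (astep ^^ t) c"

lemma arun_0[simp]: "arun 0 c = c" by (simp add: arun_def)
lemma arun_Suc: "arun (Suc n) c = arun n (astep c)"
  by (simp add: arun_def funpow_Suc_right del: funpow.simps)
lemma arun_add: "arun (a + b) c = arun b (arun a c)"
  by (simp add: arun_def arun_add_gen)

lemma astep_act:
  assumes "\<not> halted q" "j < k" "delta q (rdv T H) = act q' j c m (rdv T H)"
  shows "astep (q,T,H) = (q', T(j := (T j)(H j := c)), H(j := nat (int (H j) + m)))"
  using assms by (auto simp: act_def rdv_def fun_eq_iff)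

lemma astep_stay:
  assumes "\<not> halted q" "delta q (rdv T H) = stay q' (rdv T H)"
  shows "astep (q,T,H) = (q', T, H)"
  using assms by (auto simp: stay_def rdv_def fun_eq_iff)

lemma lft_halted: "lft q = Some x \<Longrightarrow> \<not> halted q"
  by (cases q) (auto simp: lft_def halted_def)

lemma delta_lft: "lft q = Some (j, nx) \<Longrightarrow>
   delta q rs = (if rs j = CStart then stay nx rs else act q j (rs j) (-1) rs)"
  by (cases q) (auto simp: lft_def)

lemma rdv_at: "j < k \<Longrightarrow> rdv T H j = T j (H j)" by (simp add: rdv_def)

lemma left_run:
  assumes "lft q = Some (j, nx)" "j < k" "T j 0 = CStart" "\<forall>p>0. T j p \<noteq> CStart"
  shows "arun (Suc (H j)) (q,T,H) = (nx, T, H(j := 0))"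
  using assms(4)
proof (induction "H j" arbitrary: H)
  case 0
  have "astep (q,T,H) = (nx, T, H)"
    apply (rule astep_stay[OF lft_halted[OF assms(1)]])
    using 0 assms by (simp add: delta_lft rdv_at)
  then show ?case using 0 by (simp add: arun_Suc fun_upd_idem)
next
  case (Suc n)
  have hn: "\<not> halted q" using lft_halted[OF assms(1)] .
  have "astep (q,T,H) = (q, T(j := (T j)(H j := T j (H j))), H(j := nat (int (H j) + -1)))"
    apply (rule astep_act[OF hn assms(2)])
    using Suc assms by (simp add: delta_lft rdv_at)
  also have "\<dots> = (q, T, H(j := n))" by (simp add: Suc(2)[symmetric])
  finally have "arun (Suc (H j)) (q,T,H) = arun (Suc n) (q, T, H(j := n))"
    using Suc(2) by (simp add: arun_Suc)
  also have "\<dots> = (nx, T, (H(j := n))(j := 0))"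
    using Suc(1)[of "H(j := n)"] Suc(3) by simp
  finally show ?case by simp
qed

lemma sweep:
  assumes "j < k" "\<not> halted q" "\<And>rs. P (rs j) \<Longrightarrow> delta q rs = act q j (F (rs j)) 1 rs"
  shows "(\<forall>x. p \<le> x \<and> x < p + n \<longrightarrow> P (T j x)) \<Longrightarrow> H j = p \<Longrightarrow>
     arun n (q,T,H) = (q, T(j := \<lambda>x. if p \<le> x \<and> x < p + n then F (T j x) else T j x), H(j := p + n))"
proof (induction n arbitrary: p T H)
  case 0
  then show ?case by (auto simp: fun_eq_iff)
next
  case (Suc n)
  have P: "P (T j p)" using Suc(2) by simp
  have "astep (q,T,H) = (q, T(j := (T j)(H j := F (T j (H j)))), H(j := nat (int (H j) + 1)))"
    apply (rule astep_act[OF assms(2,1)])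
    using assms(3)[of "rdv T H"] P Suc(3) assms(1) by (simp add: rdv_at)
  also have "\<dots> = (q, T(j := (T j)(p := F (T j p))), H(j := Suc p))" using Suc(3) nat_p1[of p] by simp
  finally have st: "astep (q,T,H) = \<dots>" .
  have "arun (Suc n) (q,T,H) = arun n (q, T(j := (T j)(p := F (T j p))), H(j := Suc p))"
    by (simp only: arun_Suc st)
  also have "\<dots> = (q, (T(j := (T j)(p := F (T j p))))(j := \<lambda>x. if Suc p \<le> x \<and> x < Suc p + n
        then F ((T(j := (T j)(p := F (T j p)))) j x) else (T(j := (T j)(p := F (T j p)))) j x),
        (H(j := Suc p))(j := Suc p + n))"
    by (rule Suc(1)) (use Suc(2) in auto)
  also have "\<dots> = (q, T(j := \<lambda>x. if p \<le> x \<and> x < p + Suc n then F (T j x) else T j x), H(j := p + Suc n))"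
    by (auto simp: fun_eq_iff)
  finally show ?case .
qed

end

fun ecf :: "(('a,'g) cell \<Rightarrow> nat) \<Rightarrow> ('a,'g) cell \<Rightarrow> ('a + 'g) tsym" where
  "ecf fc CStart = Start"
| "ecf fc (Out a) = Sym (Inl a)"
| "ecf fc (Cell NoIn Fresh) = Blank"
| "ecf fc (Cell (In g) Fresh) = Sym (Inr g)"
| "ecf fc c = Aux (fc c)"

lemma ecf_inj: "inj_on fc A \<Longrightarrow> inj_on (ecf fc) A"
  unfolding inj_on_def
  apply (intro ballI impI)
  subgoal for x y
    by (cases "(fc,x)" rule: ecf.cases; cases "(fc,y)" rule: ecf.cases) auto
  done

lemma ecf_Start: "ecf fc c = Start \<longleftrightarrow> c = CStart"
  by (cases "(fc,c)" rule: ecf.cases) auto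

context mach begin

definition Qset :: "'g st set" where
  "Qset = Init ` {..length w0} \<union> {InitRet, Scan, FinRet, FinW, Acc, Rej} \<union> RetS ` S
     \<union> (\<Union>g\<in>S. SimS g ` tm_states (Ms g)) \<union> CL ` {..<k} \<union> (\<lambda>(i,b). CE i b) ` ({..<k} \<times> UNIV)
     \<union> CL2 ` {..<k}"

definition SG :: "'a tsym set" where
  "SG = {Start, Blank} \<union> range Sym \<union> (\<Union>g\<in>S. tm_gamma UNIV (Ms g))"
definition Is :: "'g inp set" where "Is = {NoIn, Done} \<union> In ` S"
definition Vs :: "'a vs set" where "Vs = insert Fresh (Sim ` SG)"
definition Gam :: "('a,'g) cell set" where
  "Gam = {CStart} \<union> range Out \<union> (\<lambda>(I,v). Cell I v) ` (Is \<times> Vs)"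

lemma finite_Qset: "finite Qset"
proof -
  have "\<forall>g\<in>S. finite (tm_states (Ms g))" using wfM by (auto simp: wf_tm_def)
  then show ?thesis unfolding Qset_def using finS by auto
qed

lemma finite_Gam: "finite Gam"
proof -
  have "\<forall>g\<in>S. finite (tm_gamma UNIV (Ms g))" using wfM by (auto simp: wf_tm_def tm_gamma_def)
  then have "finite SG" unfolding SG_def using finS by auto
  then show ?thesis unfolding Gam_def Vs_def Is_def using finS by auto
qed

lemma Gam_Cell[simp]: "Cell I v \<in> Gam \<longleftrightarrow> I \<in> Is \<and> v \<in> Vs"
  by (auto simp: Gam_def)
lemma Gam_CStart[simp]: "CStart \<in> Gam" by (simp add: Gam_def)
lemma Gam_Out[simp]: "Out a \<in> Gam" by (simp add: Gam_def)
lemma Is_simps[simp]: "NoIn \<in> Is" "Done \<in> Is" "In g \<in> Is \<longleftrightarrow> g \<in> S" by (auto simp: Is_def)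
lemma Vs_Fresh[simp]: "Fresh \<in> Vs" by (simp add: Vs_def)
lemma Vs_Sim[simp]: "Sim s \<in> Vs \<longleftrightarrow> s \<in> SG" by (auto simp: Vs_def)
lemma SG_simps[simp]: "Start \<in> SG" "Blank \<in> SG" "Sym a \<in> SG" by (auto simp: SG_def)
lemma SG_gamma: "g \<in> S \<Longrightarrow> s \<in> tm_gamma UNIV (Ms g) \<Longrightarrow> s \<in> SG" by (auto simp: SG_def)

lemma Qset_simps[simp]: "Init j \<in> Qset \<longleftrightarrow> j \<le> length w0" "InitRet \<in> Qset" "Scan \<in> Qset"
  "FinRet \<in> Qset" "FinW \<in> Qset" "Acc \<in> Qset" "Rej \<in> Qset" "RetS g \<in> Qset \<longleftrightarrow> g \<in> S"
  "SimS g q \<in> Qset \<longleftrightarrow> g \<in> S \<and> q \<in> tm_states (Ms g)" "CL i \<in> Qset \<longleftrightarrow> i < k"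
  "CE i b \<in> Qset \<longleftrightarrow> i < k" "CL2 i \<in> Qset \<longleftrightarrow> i < k"
  by (auto simp: Qset_def)

definition okout :: "'g st \<Rightarrow> (nat \<Rightarrow> ('a,'g) cell) \<Rightarrow> 'g st \<times> (nat \<Rightarrow> ('a,'g) cell) \<times> (nat \<Rightarrow> int) \<Rightarrow> bool" where
  "okout q rs r = (case r of (q', ws, ms) \<Rightarrow> q' \<in> Qset \<and> (\<forall>i<k. ws i \<in> Gam \<and> ms i \<in> {-1,0,1} \<and>
      (ws i = CStart \<longleftrightarrow> rs i = CStart) \<and> (rs i = CStart \<longrightarrow> ms i \<noteq> -1)))"

lemma okout_act: "q' \<in> Qset \<Longrightarrow> (\<forall>i<k. rs i \<in> Gam) \<Longrightarrow> c \<in> Gam \<Longrightarrow> m \<in> {-1,0,1} \<Longrightarrow>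
   (c = CStart \<longleftrightarrow> rs j = CStart) \<Longrightarrow> (rs j = CStart \<longrightarrow> m \<noteq> -1) \<Longrightarrow> okout q rs (act q' j c m rs)"
  by (auto simp: okout_def act_def)

lemma okout_stay: "q' \<in> Qset \<Longrightarrow> (\<forall>i<k. rs i \<in> Gam) \<Longrightarrow> okout q rs (stay q' rs)"
  by (auto simp: okout_def stay_def)

lemma delta_wf:
  assumes q: "q \<in> Qset" and nh: "\<not> halted q" and rs: "\<forall>i<k. rs i \<in> Gam"
  shows "okout q rs (delta q rs)"
proof (cases q)
  case (Init j)
  then show ?thesis using q rs k1
    by (cases "rs 0") (auto intro!: okout_act okout_stay)
next
  case InitRet
  then show ?thesis using q rs k1
    by (auto simp: delta_lft lft_def intro!: okout_act okout_stay)
next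
  case Scan
  then show ?thesis using q rs k1
    apply (cases "rs 0")
    subgoal by (auto intro!: okout_act okout_stay)
    subgoal for I v by (cases I) (auto intro!: okout_act okout_stay)
    subgoal by (auto intro!: okout_act okout_stay)
    done
next
  case (RetS g)
  then show ?thesis using q rs k1 wfM
    by (auto simp: delta_lft lft_def wf_tm_def intro!: okout_act okout_stay)
next
  case (SimS g qq)
  show ?thesis
  proof (cases "qq \<in> tm_halt (Ms g)")
    case True
    then show ?thesis using SimS q rs k1 by (auto intro!: okout_stay)
  next
    case False
    obtain q' wl ml where d: "tm_delta (Ms g) qq (map (\<lambda>i. dec (rs i)) [0..<k]) = (q', wl, ml)"
      by (metis prod_cases3)
    have g: "g \<in> S" "qq \<in> tm_states (Ms g)" using q SimS by auto
    show ?thesis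
    proof (cases "simok g (map (\<lambda>i. dec (rs i)) [0..<k]) (q', wl, ml)")
      case True
      have ws: "\<forall>i<k. wl ! i \<in> SG" using True g unfolding simok_def
        by (auto intro!: SG_gamma[OF g(1)] dest!: nth_mem[of _ wl] )
      have ms: "\<forall>i<k. ml ! i \<in> {-1,0,1}"
      proof (intro allI impI)
        fix i assume "i < k"
        then have "ml ! i \<in> set ml" using True by (simp add: simok_def)
        then show "ml ! i \<in> {-1,0,1}" using True by (auto simp: simok_def)
      qed
      have st: "\<forall>i<k. rs i = CStart \<longrightarrow> ml ! i \<noteq> -1" using True unfolding simok_def by auto
      have "okout q rs (SimS g q', \<lambda>i. if i < k then (case rs i of Cell I v \<Rightarrow> Cell I (Sim (wl!i)) | c \<Rightarrow> c) else rs i,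
           \<lambda>i. if i < k then ml!i else 0)"
        unfolding okout_def using True g ws ms st rs
        apply (simp add: simok_def)
        apply (intro allI impI)
        subgoal for i by (cases "rs i") auto
        done
      then show ?thesis using SimS False d True by (simp add: simstep_def Let_def)
    next
      case nok: False
      then show ?thesis using SimS False d rs by (simp add: simstep_def Let_def okout_stay)
    qed
  qed
next
  case (CL i)
  then show ?thesis using q rs k1
    by (auto simp: delta_lft lft_def intro!: okout_act okout_stay)
next
  case (CE i b)
  then show ?thesis using q rs k1
    apply (cases "rs i")
    subgoal by (auto intro!: okout_act okout_stay)
    subgoal for I v by (auto intro!: okout_act okout_stay)
    subgoal by (auto intro!: okout_act okout_stay)
    done
next
  case (CL2 i)
  then show ?thesis using q rs k1
    by (auto simp: delta_lft lft_def intro!: okout_act okout_stay)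
next
  case FinRet
  then show ?thesis using q rs k1
    by (auto simp: delta_lft lft_def intro!: okout_act okout_stay)
next
  case FinW
  then show ?thesis using q rs k1
    apply (cases "rs 0")
    subgoal by (auto intro!: okout_act okout_stay)
    subgoal for I v by (cases "Cell I v" rule: outF.cases) (auto intro!: okout_act okout_stay)
    subgoal by (auto intro!: okout_act okout_stay)
    done
qed (use nh in \<open>auto simp: halted_def\<close>)

end

context mach begin

definition Bset :: "('a + 'g) set" where "Bset = Inl ` UNIV \<union> Inr ` S"

definition Mc :: "('g st \<Rightarrow> nat) \<Rightarrow> (('a,'g) cell \<Rightarrow> nat) \<Rightarrow> ('a + 'g) tm" where
  "Mc qe fc = \<lparr> tm_k = k, tm_states = qe ` Qset, tm_aux = Aux -` (ecf fc ` Gam), tm_start = qe (Init 0),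
     tm_halt = {qe Acc, qe Rej}, tm_accept = {qe Acc},
     tm_delta = \<lambda>qn rl. (case delta (inv_into Qset qe qn)
          (\<lambda>i. if i < k then inv_into Gam (ecf fc) (rl ! i) else CStart) of
        (q', ws, ms) \<Rightarrow> (qe q', map (\<lambda>i. ecf fc (ws i)) [0..<k], map ms [0..<k])) \<rparr>"

definition conc :: "('g st \<Rightarrow> nat) \<Rightarrow> (('a,'g) cell \<Rightarrow> nat) \<Rightarrow> 'g st \<times> (nat \<Rightarrow> nat \<Rightarrow> ('a,'g) cell) \<times> (nat \<Rightarrow> nat)
   \<Rightarrow> ('a + 'g) tm_config" where
  "conc qe fc c = (case c of (q, T, H) \<Rightarrow> (qe q, map (\<lambda>i. ecf fc \<circ> T i) [0..<k], map H [0..<k]))"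

definition good :: "'g st \<times> (nat \<Rightarrow> nat \<Rightarrow> ('a,'g) cell) \<times> (nat \<Rightarrow> nat) \<Rightarrow> bool" where
  "good c = (case c of (q,T,H) \<Rightarrow> q \<in> Qset \<and> (\<forall>i<k. \<forall>p. T i p \<in> Gam))"

lemma gamma_Mc: "tm_gamma Bset (Mc qe fc) = ecf fc ` Gam"
proof
  show "tm_gamma Bset (Mc qe fc) \<subseteq> ecf fc ` Gam"
  proof
    fix x assume "x \<in> tm_gamma Bset (Mc qe fc)"
    then consider "x = Start" | "x = Blank" | a where "x = Sym (Inl a)" | g where "g \<in> S" "x = Sym (Inr g)"
      | "x \<in> Aux ` (Aux -` (ecf fc ` Gam))"
      by (auto simp: tm_gamma_def Mc_def Bset_def)
    then show "x \<in> ecf fc ` Gam"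
    proof cases
      case 1 then show ?thesis by (metis Gam_CStart ecf.simps(1) image_eqI)
    next
      case 2 then show ?thesis
        by (metis Gam_Cell Is_simps(1) Vs_Fresh ecf.simps(3) image_eqI)
    next
      case (3 a) then show ?thesis by (metis Gam_Out ecf.simps(2) image_eqI)
    next
      case (4 g) then show ?thesis
        by (metis Gam_Cell Is_simps(3) Vs_Fresh ecf.simps(4) image_eqI)
    next
      case 5 then show ?thesis by auto
    qed
  qed
next
  show "ecf fc ` Gam \<subseteq> tm_gamma Bset (Mc qe fc)"
  proof
    fix y assume "y \<in> ecf fc ` Gam"
    then obtain c where c: "c \<in> Gam" "y = ecf fc c" by auto
    show "y \<in> tm_gamma Bset (Mc qe fc)"
    proof (cases y)
      case (Sym b)
      show ?thesis
      proof (cases b)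
        case (Inl a) then show ?thesis using Sym by (auto simp: tm_gamma_def Bset_def)
      next
        case (Inr g)
        have "g \<in> S" using c Sym Inr by (cases "(fc,c)" rule: ecf.cases) auto
        then show ?thesis using Sym Inr by (auto simp: tm_gamma_def Bset_def)
      qed
    next
      case (Aux n)
      then have "n \<in> Aux -` (ecf fc ` Gam)" using c by (metis image_eqI vimageI)
      then have "y \<in> Aux ` (Aux -` (ecf fc ` Gam))" using Aux by blast
      then show ?thesis by (simp add: tm_gamma_def Mc_def)
    qed (auto simp: tm_gamma_def)
  qed
qed

lemma halted_conc:
  assumes qe: "inj_on qe Qset" and q: "q \<in> Qset"
  shows "qe q \<in> tm_halt (Mc qe fc) \<longleftrightarrow> halted q"
  using inj_onD[OF qe _ q] q by (auto simp: Mc_def halted_def)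

lemma step_conc:
  assumes qe: "inj_on qe Qset" and fc: "inj_on fc Gam" and g: "good c"
  shows "good (astep c) \<and> tm_step (Mc qe fc) (conc qe fc c) = conc qe fc (astep c)"
proof -
  obtain q T H where c: "c = (q,T,H)" by (metis prod_cases3)
  have q: "q \<in> Qset" and TG: "\<forall>i<k. \<forall>p. T i p \<in> Gam" using g c by (auto simp: good_def)
  have ec: "inj_on (ecf fc) Gam" using ecf_inj[OF fc] .
  show ?thesis
  proof (cases "halted q")
    case True
    then show ?thesis using c g halted_conc[OF qe q, of fc] by (simp add: conc_def)
  next
    case False
    obtain q' ws ms where d: "delta q (rdv T H) = (q', ws, ms)" by (metis prod_cases3)
    have rG: "\<forall>i<k. rdv T H i \<in> Gam" using TG by (simp add: rdv_def)
    have ok: "okout q (rdv T H) (q', ws, ms)" using delta_wf[OF q False rG] d by simp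
    have rl: "(\<lambda>i. if i < k then inv_into Gam (ecf fc) (map (\<lambda>i. (map (\<lambda>i. ecf fc \<circ> T i) [0..<k] ! i) (map H [0..<k] ! i)) [0..<k] ! i) else CStart)
        = rdv T H"
      using TG ec by (auto simp: fun_eq_iff rdv_def)
    have iq: "inv_into Qset qe (qe q) = q" using qe q by simp
    have as: "astep c = (q', \<lambda>i. if i < k then (T i)(H i := ws i) else T i,
            \<lambda>i. if i < k then nat (int (H i) + ms i) else H i)"
      using c False d by simp
    have "good (astep c)" using as ok TG unfolding good_def okout_def by auto
    moreover have "tm_step (Mc qe fc) (conc qe fc c) = conc qe fc (astep c)"
      using halted_conc[OF qe q, of fc] False unfolding c as conc_def
      by (simp add: Mc_def rl iq d Let_def fun_eq_iff)
    ultimately show ?thesis by simp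
  qed
qed

lemma arun_Suc2: "arun (Suc n) c = astep (arun n c)" by (simp add: arun_def)

lemma run_conc:
  assumes qe: "inj_on qe Qset" and fc: "inj_on fc Gam" and g: "good c"
  shows "good (arun t c) \<and> tm_run (Mc qe fc) (conc qe fc c) t = conc qe fc (arun t c)"
proof (induction t)
  case 0 then show ?case using g by (simp add: tm_run_def)
next
  case (Suc t)
  then show ?case using step_conc[OF qe fc, of "arun t c"]
    by (simp add: arun_Suc2 tm_run_def)
qed

lemma wf_Mc:
  assumes qe: "inj_on qe Qset" and fc: "inj_on fc Gam"
  shows "wf_tm k Bset (Mc qe fc)"
proof -
  have ec: "inj_on (ecf fc) Gam" using ecf_inj[OF fc] .
  have fin: "finite Bset" using finS by (simp add: Bset_def)
  have faux: "finite (Aux -` (ecf fc ` Gam))"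
    by (rule finite_vimageI) (use finite_Gam in \<open>auto simp: inj_def\<close>)
  have cl: "case tm_delta (Mc qe fc) qn rl of (q', ws, ms) \<Rightarrow>
           q' \<in> tm_states (Mc qe fc) \<and> length ws = k \<and> length ms = k \<and>
           set ws \<subseteq> tm_gamma Bset (Mc qe fc) \<and> set ms \<subseteq> {-1, 0, 1} \<and>
           (\<forall>i<k. (ws ! i = Start \<longleftrightarrow> rl ! i = Start) \<and> (rl ! i = Start \<longrightarrow> ms ! i \<noteq> -1))"
    if qn: "qn \<in> tm_states (Mc qe fc) - tm_halt (Mc qe fc)" and rl: "length rl = k"
       "set rl \<subseteq> tm_gamma Bset (Mc qe fc)" for qn rl
  proof -
    obtain q where q: "q \<in> Qset" "qn = qe q" using qn by (auto simp: Mc_def)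
    have nh: "\<not> halted q" using qn q halted_conc[OF qe q(1), of fc] by simp
    define rs where "rs = (\<lambda>i. if i < k then inv_into Gam (ecf fc) (rl ! i) else CStart)"
    have rlG: "\<forall>i<k. rl ! i \<in> ecf fc ` Gam" using rl gamma_Mc[of qe fc] by (auto dest!: nth_mem)
    have rsG: "\<forall>i<k. rs i \<in> Gam" using rlG by (auto simp: rs_def inv_into_into)
    have rse: "\<forall>i<k. ecf fc (rs i) = rl ! i" using rlG by (auto simp: rs_def f_inv_into_f)
    obtain q' ws ms where d: "delta q rs = (q', ws, ms)" by (metis prod_cases3)
    have ok: "okout q rs (q', ws, ms)" using delta_wf[OF q(1) nh rsG] d by simp
    have td: "tm_delta (Mc qe fc) qn rl = (qe q', map (\<lambda>i. ecf fc (ws i)) [0..<k], map ms [0..<k])"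
      using qe q d by (simp add: Mc_def rs_def[symmetric])
    show ?thesis unfolding td using ok rse gamma_Mc[of qe fc]
      by (auto simp: okout_def Mc_def ecf_Start)
  qed
  show ?thesis unfolding wf_tm_def
    using k1 fin finite_Qset faux cl by (auto simp: Mc_def)
qed

definition tp0 :: "'g list \<Rightarrow> nat \<Rightarrow> 'a list \<Rightarrow> nat \<Rightarrow> ('a,'g) cell" where
  "tp0 gs m w p = (if p = 0 then CStart else
     Cell (if p \<le> m then Done else if p \<le> length gs then In (gs!(p-1)) else NoIn)
          (if p \<le> length w then Sim (Sym (w!(p-1))) else Fresh))"
definition tpB :: "nat \<Rightarrow> ('a,'g) cell" where "tpB p = (if p = 0 then CStart else Cell NoIn Fresh)"
definition Tof :: "'g list \<Rightarrow> nat \<Rightarrow> 'a list \<Rightarrow> nat \<Rightarrow> nat \<Rightarrow> ('a,'g) cell" where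
  "Tof gs m w = (\<lambda>i. if i = 0 then tp0 gs m w else tpB)"

lemma init_conc:
  "conc qe fc (Init 0, Tof gs 0 [], \<lambda>i. 0) = tm_init (Mc qe fc) (map Inr gs)"
proof -
  have "map (\<lambda>i. ecf fc \<circ> Tof gs 0 [] i) [0..<k] =
      (\<lambda>i. if i = 0 then Start else if i \<le> length (map Inr gs) then Sym (map Inr gs ! (i - 1)) else Blank)
        # replicate (k - 1) (\<lambda>i. if i = 0 then Start else Blank)"
  proof (rule nth_equalityI)
    show "length (map (\<lambda>i. ecf fc \<circ> Tof gs 0 [] i) [0..<k]) = length ((\<lambda>i. if i = 0 then Start else if i \<le> length (map Inr gs) then Sym (map Inr gs ! (i - 1)) else Blank)
        # replicate (k - 1) (\<lambda>i. if i = 0 then Start else Blank))" using k1 by simp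
  next
    fix i assume "i < length (map (\<lambda>i. ecf fc \<circ> Tof gs 0 [] i) [0..<k])"
    then have i: "i < k" by simp
    show "map (\<lambda>i. ecf fc \<circ> Tof gs 0 [] i) [0..<k] ! i = ((\<lambda>i. if i = 0 then Start else if i \<le> length (map Inr gs) then Sym (map Inr gs ! (i - 1)) else Blank)
        # replicate (k - 1) (\<lambda>i. if i = 0 then Start else Blank)) ! i"
      using i by (cases i) (auto simp: Tof_def tp0_def tpB_def fun_eq_iff nth_Cons')
  qed
  moreover have "map (\<lambda>i. 0::nat) [0..<k] = replicate k 0" by (simp add: map_replicate_const)
  ultimately show ?thesis by (simp add: conc_def tm_init_def Mc_def)
qed

lemma good_init: "set gs \<subseteq> S \<Longrightarrow> good (Init 0, Tof gs 0 [], \<lambda>i. 0)"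
  by (auto simp: good_def Tof_def tp0_def tpB_def)

lemma outputs_conc:
  assumes qe: "inj_on qe Qset" and fc: "inj_on fc Gam" and sg: "set gs \<subseteq> S"
    and r: "arun t (Init 0, Tof gs 0 [], \<lambda>i. 0) = (Acc, T, H)"
    and o: "tape_has_output (ecf fc \<circ> T 0) y" and tb: "real t \<le> B"
  shows "tm_outputs_within (Mc qe fc) (map Inr gs) y B"
proof -
  have "tm_run (Mc qe fc) (tm_init (Mc qe fc) (map Inr gs)) t = conc qe fc (Acc, T, H)"
    using run_conc[OF qe fc good_init[OF sg], of t] r by (simp add: init_conc)
  then show ?thesis unfolding tm_outputs_within_def using tb o k1
    by (intro exI[of _ t]) (auto simp: conc_def Mc_def hd_map upt_conv_Cons)
qed

end

context mach begin

lemma k0: "0 < k" using k1 by simp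

lemma step_act: "\<not> halted q \<Longrightarrow> j < k \<Longrightarrow> delta q (rdv T H) = act q' j c m (rdv T H) \<Longrightarrow>
   T' = T(j := (T j)(H j := c)) \<Longrightarrow> H' = H(j := nat (int (H j) + m)) \<Longrightarrow> astep (q,T,H) = (q',T',H')"
  using astep_act by simp

lemma step_stay: "\<not> halted q \<Longrightarrow> delta q (rdv T H) = stay q' (rdv T H) \<Longrightarrow> astep (q,T,H) = (q',T,H)"
  using astep_stay by simp

lemma arun_1: "arun 1 c = astep c" by (simp add: arun_def)

lemma init_write:
  assumes "\<forall>p>0. \<exists>I v. T 0 p = Cell I v" "H 0 = 1"
  shows "j \<le> length w0 \<Longrightarrow> arun j (Init 0, T, H) = (Init j, T(0 := \<lambda>p. if 0 < p \<and> p \<le> j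
     then Cell (inpof (T 0 p)) (Sim (Sym (w0!(p-1)))) else T 0 p), H(0 := Suc j))"
proof (induction j)
  case 0
  then show ?case using assms by (auto simp: fun_eq_iff)
next
  case (Suc j)
  obtain I v where c: "T 0 (Suc j) = Cell I v" using assms(1) by blast
  have IH: "arun j (Init 0, T, H) = (Init j, T(0 := \<lambda>p. if 0 < p \<and> p \<le> j
     then Cell (inpof (T 0 p)) (Sim (Sym (w0!(p-1)))) else T 0 p), H(0 := Suc j))"
    by (rule Suc.IH) (use Suc.prems in simp)
  have "arun (Suc j) (Init 0, T, H) = astep (Init j, T(0 := \<lambda>p. if 0 < p \<and> p \<le> j
     then Cell (inpof (T 0 p)) (Sim (Sym (w0!(p-1)))) else T 0 p), H(0 := Suc j))"
    by (simp only: arun_Suc2 IH)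
  also have "\<dots> = (Init (Suc j), T(0 := \<lambda>p. if 0 < p \<and> p \<le> Suc j
     then Cell (inpof (T 0 p)) (Sim (Sym (w0!(p-1)))) else T 0 p), H(0 := Suc (Suc j)))"
    apply (rule step_act[where j=0 and c="Cell I (Sim (Sym (w0!j)))" and m=1])
    using Suc(2) c k0 by (auto simp: halted_def rdv_at fun_eq_iff nat_p1)
  finally show ?case .
qed

lemma Tof_cell: "p > 0 \<Longrightarrow> \<exists>I v. Tof gs m w i p = Cell I v"
  by (auto simp: Tof_def tp0_def tpB_def)
lemma Tof_0[simp]: "Tof gs m w i 0 = CStart"
  by (auto simp: Tof_def tp0_def tpB_def)
lemma Tof_nz: "p > 0 \<Longrightarrow> Tof gs m w i p \<noteq> CStart"
  by (auto simp: Tof_def tp0_def tpB_def)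

lemma init_phase: "arun (2 * length w0 + 4) (Init 0, Tof gs 0 [], \<lambda>i. 0) = (Scan, Tof gs 0 w0, \<lambda>i. 0)"
proof -
  let ?T = "Tof gs 0 [] :: nat \<Rightarrow> nat \<Rightarrow> ('a,'g) cell"
  let ?T1 = "?T(0 := \<lambda>p. if 0 < p \<and> p \<le> length w0
     then Cell (inpof (?T 0 p)) (Sim (Sym (w0!(p-1)))) else ?T 0 p)"
  have T1: "?T1 = Tof gs 0 w0" by (auto simp: fun_eq_iff Tof_def tp0_def)
  have s1: "arun 1 (Init 0, ?T, \<lambda>i. 0) = (Init 0, ?T, (\<lambda>i. 0)(0 := 1))"
    unfolding arun_1
    apply (rule step_act[where j=0 and c=CStart and m=1])
    using k0 by (auto simp: halted_def rdv_at fun_eq_iff)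
  have s2: "arun (length w0) (Init 0, ?T, (\<lambda>i. 0)(0 := 1)) = (Init (length w0), ?T1, (\<lambda>i. 0)(0 := Suc (length w0)))"
    using init_write[of ?T "(\<lambda>i. 0)(0 := 1)" "length w0"] Tof_cell by auto
  have s3: "arun 1 (Init (length w0), ?T1, (\<lambda>i. 0)(0 := Suc (length w0))) = (InitRet, ?T1, (\<lambda>i. 0)(0 := Suc (length w0)))"
    unfolding arun_1 T1
    apply (rule step_stay)
    using k0 Tof_cell[of "Suc (length w0)" gs 0 w0 0] by (auto simp: halted_def rdv_at)
  have s4: "arun (Suc (Suc (length w0))) (InitRet, ?T1, (\<lambda>i. 0)(0 := Suc (length w0))) = (Scan, ?T1, \<lambda>i. 0)"
    using left_run[of InitRet 0 Scan ?T1 "(\<lambda>i. 0)(0 := Suc (length w0))"] k0 T1 Tof_nz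
    by (auto simp: lft_def)
  have main: "arun (1 + length w0 + 1 + Suc (Suc (length w0))) (Init 0, ?T, \<lambda>i. 0) = (Scan, ?T1, \<lambda>i. 0)"
    by (simp only: arun_add s1 s2 s3 s4)
  have eq: "2 * length w0 + 4 = 1 + length w0 + 1 + Suc (Suc (length w0))" by simp
  show ?thesis by (simp only: eq main T1)
qed

end

lemma nat_1p[simp]: "nat (1 + int p) = Suc p" by simp
lemma nat_0p[simp]: "nat (int p + 0) = p" by simp

context mach begin

definition nxt :: "nat \<Rightarrow> 'g st" where "nxt i = (if Suc i < k then CL (Suc i) else Scan)"

lemma lft_CL: "lft (CL i) = Some (i, CE i (i = 0))" by (simp add: lft_def)
lemma lft_CL2: "lft (CL2 i) = Some (i, nxt i)" by (simp add: lft_def nxt_def)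

lemma nh[simp]: "\<not> halted Scan" "\<not> halted FinW" "\<not> halted (CE i b)" "\<not> halted (SimS g q)"
   "\<not> halted (CL i)" "\<not> halted (CL2 i)" "\<not> halted FinRet" "\<not> halted (RetS g)"
  by (auto simp: halted_def)

lemma d_scan: "rs 0 = CStart \<or> (\<exists>v. rs 0 = Cell Done v) \<Longrightarrow> delta Scan rs = act Scan 0 (id (rs 0)) 1 rs"
  by auto
lemma d_finw: "rs 0 = CStart \<or> isSymCell (rs 0) \<Longrightarrow> delta FinW rs = act FinW 0 (outF (rs 0)) 1 rs"
  by (cases "rs 0" rule: outF.cases) auto
lemma d_keep: "rs i = CStart \<or> isSymCell (rs i) \<Longrightarrow> delta (CE i True) rs = act (CE i True) i (id (rs i)) 1 rs"
  by (cases "rs i" rule: outF.cases) auto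
lemma d_erase: "rs i = CStart \<or> isSimCell (rs i) \<Longrightarrow> delta (CE i False) rs = act (CE i False) i (eraseF (rs i)) 1 rs"
  by (cases "rs i" rule: isSimCell.cases) auto

lemma sweep_id:
  assumes "j < k" "\<not> halted q" "\<And>rs. P (rs j) \<Longrightarrow> delta q rs = act q j (rs j) 1 rs"
    "\<forall>x. p \<le> x \<and> x < p + n \<longrightarrow> P (T j x)" "H j = p"
  shows "arun n (q,T,H) = (q, T, H(j := p + n))"
proof -
  have "arun n (q,T,H) = (q, T(j := \<lambda>x. if p \<le> x \<and> x < p + n then id (T j x) else T j x), H(j := p + n))"
    by (rule sweep[of j q P id]) (use assms in auto)
  moreover have "T(j := \<lambda>x. if p \<le> x \<and> x < p + n then id (T j x) else T j x) = T"
    by (auto simp: fun_eq_iff)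
  ultimately show ?thesis by simp
qed

lemma scan_phase:
  assumes m: "m < length gs"
  shows "arun (2*m+4) (Scan, Tof gs m w, \<lambda>i. 0) = (SimS (gs!m) (tm_start (Ms (gs!m))), Tof gs (Suc m) w, \<lambda>i. 0)"
proof -
  let ?T = "Tof gs m w :: nat \<Rightarrow> nat \<Rightarrow> ('a,'g) cell"
  let ?T' = "Tof gs (Suc m) w :: nat \<Rightarrow> nat \<Rightarrow> ('a,'g) cell"
  have P: "\<forall>x. 0 \<le> x \<and> x < 0 + Suc m \<longrightarrow> ?T 0 x = CStart \<or> (\<exists>v. ?T 0 x = Cell Done v)"
    by (auto simp: Tof_def tp0_def)
  have s1: "arun (Suc m) (Scan, ?T, \<lambda>i. 0) = (Scan, ?T, (\<lambda>i. 0)(0 := 0 + Suc m))"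
    by (rule sweep_id[of 0 Scan "\<lambda>c. c = CStart \<or> (\<exists>v. c = Cell Done v)"]) (use k0 d_scan P in auto)
  obtain v where v: "?T 0 (Suc m) = Cell (In (gs!m)) v" using m by (auto simp: Tof_def tp0_def)
  have T': "?T(0 := (?T 0)(Suc m := Cell Done v)) = ?T'" using v by (auto simp: fun_eq_iff Tof_def tp0_def)
  have s2: "arun 1 (Scan, ?T, (\<lambda>i. 0)(0 := 0 + Suc m)) = (RetS (gs!m), ?T', (\<lambda>i. 0)(0 := Suc m))"
    unfolding arun_1
    by (rule step_act[where j=0 and c="Cell Done v" and m=0]) (use k0 v T' in \<open>auto simp: rdv_at\<close>)
  have s3: "arun (Suc (Suc m)) (RetS (gs!m), ?T', (\<lambda>i. 0)(0 := Suc m)) = (SimS (gs!m) (tm_start (Ms (gs!m))), ?T', \<lambda>i. 0)"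
    using left_run[of "RetS (gs!m)" 0 _ ?T' "(\<lambda>i. 0)(0 := Suc m)"] k0 Tof_nz
    by (auto simp: lft_def)
  have main: "arun (Suc m + 1 + Suc (Suc m)) (Scan, ?T, \<lambda>i. 0) = (SimS (gs!m) (tm_start (Ms (gs!m))), ?T', \<lambda>i. 0)"
    by (simp only: arun_add s1 s2 s3)
  have eq: "2*m+4 = Suc m + 1 + Suc (Suc m)" by simp
  show ?thesis by (simp only: eq main)
qed

lemma final_phase:
  assumes n: "n = length gs"
  shows "\<exists>T H. arun (2*n + length w + 6) (Scan, Tof gs n w, \<lambda>i. 0) = (Acc, T, H) \<and>
     tape_has_output (ecf fc \<circ> T 0) (map Inl w)"
proof -
  let ?T = "Tof gs n w :: nat \<Rightarrow> nat \<Rightarrow> ('a,'g) cell"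
  have P: "\<forall>x. 0 \<le> x \<and> x < 0 + Suc n \<longrightarrow> ?T 0 x = CStart \<or> (\<exists>v. ?T 0 x = Cell Done v)"
    using n by (auto simp: Tof_def tp0_def)
  have s1': "arun (Suc n) (Scan, ?T, \<lambda>i. 0) = (Scan, ?T, (\<lambda>i. 0)(0 := 0 + Suc n))"
    by (rule sweep_id[of 0 Scan "\<lambda>c. c = CStart \<or> (\<exists>v. c = Cell Done v)"]) (use k0 d_scan P in auto)
  then have s1: "arun (Suc n) (Scan, ?T, \<lambda>i. 0) = (Scan, ?T, (\<lambda>i. 0)(0 := Suc n))" by simp
  obtain v where v: "?T 0 (Suc n) = Cell NoIn v" using n by (auto simp: Tof_def tp0_def)
  have s2: "arun 1 (Scan, ?T, (\<lambda>i. 0)(0 := Suc n)) = (FinRet, ?T, (\<lambda>i. 0)(0 := Suc n))"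
    unfolding arun_1
    by (rule step_stay) (use k0 v in \<open>auto simp: rdv_at\<close>)
  have s3: "arun (Suc (Suc n)) (FinRet, ?T, (\<lambda>i. 0)(0 := Suc n)) = (FinW, ?T, \<lambda>i. 0)"
    using left_run[of FinRet 0 _ ?T "(\<lambda>i. 0)(0 := Suc n)"] k0 Tof_nz
    by (auto simp: lft_def)
  let ?T2 = "?T(0 := \<lambda>x. if 0 \<le> x \<and> x < 0 + Suc (length w) then outF (?T 0 x) else ?T 0 x)"
  have s4: "arun (Suc (length w)) (FinW, ?T, \<lambda>i. 0) = (FinW, ?T2, (\<lambda>i. 0)(0 := 0 + Suc (length w)))"
    apply (rule sweep[of 0 FinW "\<lambda>c. c = CStart \<or> isSymCell c" outF])
    using k0 d_finw by (auto simp: Tof_def tp0_def)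
  obtain I where I: "?T2 0 (Suc (length w)) = Cell I Fresh" by (auto simp: Tof_def tp0_def)
  let ?T3 = "?T2(0 := (?T2 0)(Suc (length w) := Cell NoIn Fresh))"
  have s5: "arun 1 (FinW, ?T2, (\<lambda>i. 0)(0 := 0 + Suc (length w))) = (Acc, ?T3, (\<lambda>i. 0)(0 := Suc (length w)))"
    unfolding arun_1
    by (rule step_act[where j=0 and c="Cell NoIn Fresh" and m=0]) (use k0 I in \<open>auto simp: rdv_at\<close>)
  have main: "arun (Suc n + 1 + Suc (Suc n) + Suc (length w) + 1) (Scan, ?T, \<lambda>i. 0) = (Acc, ?T3, (\<lambda>i. 0)(0 := Suc (length w)))"
    by (simp only: arun_add s1 s2 s3 s4 s5)
  have eq: "2*n + length w + 6 = Suc n + 1 + Suc (Suc n) + Suc (length w) + 1" by simp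
  have out: "tape_has_output (ecf fc \<circ> ?T3 0) (map Inl w)"
    by (auto simp: tape_has_output_def Tof_def tp0_def)
  show ?thesis using main out unfolding eq by blast
qed

definition dirty :: "(nat \<Rightarrow> ('a,'g) cell) \<Rightarrow> (nat \<Rightarrow> 'g inp) \<Rightarrow> nat \<Rightarrow> nat \<Rightarrow> bool" where
  "dirty tp I E h \<longleftrightarrow> tp 0 = CStart \<and> (\<forall>p>0. \<exists>v. tp p = Cell (I p) v) \<and>
     (\<forall>p>0. vof (tp p) = Fresh \<longleftrightarrow> E < p) \<and> h \<le> E + 1"

lemma clean_other:
  assumes i: "i < k" "i \<noteq> 0" and d: "dirty (T i) (\<lambda>_. NoIn) E (H i)"
  shows "arun (H i + 2*E + 5) (CL i, T, H) = (nxt i, T(i := tpB), H(i := 0))"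
proof -
  have T0: "T i 0 = CStart" and Tc: "\<And>p. p > 0 \<Longrightarrow> \<exists>v. T i p = Cell NoIn v"
    and Tf: "\<And>p. p > 0 \<Longrightarrow> vof (T i p) = Fresh \<longleftrightarrow> E < p" using d by (auto simp: dirty_def)
  have nz: "\<forall>p>0. T i p \<noteq> CStart"
  proof (intro allI impI)
    fix p :: nat assume "p > 0"
    then obtain v where "T i p = Cell NoIn v" using Tc by blast
    then show "T i p \<noteq> CStart" by simp
  qed
  have s1: "arun (Suc (H i)) (CL i, T, H) = (CE i False, T, H(i := 0))"
    using left_run[of "CL i" i "CE i False" T H] lft_CL[of i] i T0 nz by simp
  define T2 where "T2 = T(i := \<lambda>x. if 0 \<le> x \<and> x < 0 + Suc E then eraseF (T i x) else T i x)"
  have P: "T i x = CStart \<or> isSimCell (T i x)" if "0 \<le> x \<and> x < 0 + Suc E" for x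
  proof (cases "x = 0")
    case True then show ?thesis using T0 by simp
  next
    case False
    then obtain v where v: "T i x = Cell NoIn v" using Tc[of x] by auto
    have "v \<noteq> Fresh" using Tf[of x] that False v by simp
    then show ?thesis using v by (cases v) auto
  qed
  have s2: "arun (Suc E) (CE i False, T, H(i := 0)) = (CE i False, T2, (H(i := 0))(i := 0 + Suc E))"
    unfolding T2_def
    apply (rule sweep[of i "CE i False" "\<lambda>c. c = CStart \<or> isSimCell c" eraseF])
    subgoal using i by simp
    subgoal by simp
    subgoal for rs by (rule d_erase)
    subgoal using P by blast
    subgoal by simp
    done
  have c2: "T2 i (Suc E) = Cell NoIn Fresh"
  proof -
    obtain v where v: "T i (Suc E) = Cell NoIn v" using Tc[of "Suc E"] by blast
    then have "v = Fresh" using Tf[of "Suc E"] by simp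
    then show ?thesis using v by (simp add: T2_def)
  qed
  have s3: "arun 1 (CE i False, T2, (H(i := 0))(i := 0 + Suc E)) = (CL2 i, T2, (H(i := 0))(i := 0 + Suc E))"
    unfolding arun_1 by (rule step_stay) (use i c2 in \<open>simp_all add: rdv_at\<close>)
  have T2: "T2 = T(i := tpB)"
  proof -
    have "T2 i x = tpB x" for x
    proof (cases "x = 0")
      case True then show ?thesis using T0 by (simp add: tpB_def T2_def)
    next
      case False
      then obtain v where v: "T i x = Cell NoIn v" using Tc[of x] by auto
      have "E < x \<Longrightarrow> v = Fresh" using Tf[of x] v False by simp
      then show ?thesis using v False by (auto simp: tpB_def T2_def)
    qed
    then show ?thesis by (auto simp: fun_eq_iff T2_def)
  qed
  have nz2: "\<forall>p>0. T2 i p \<noteq> CStart" unfolding T2 by (simp add: tpB_def)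
  have s4: "arun (Suc (Suc E)) (CL2 i, T2, (H(i := 0))(i := 0 + Suc E)) = (nxt i, T2, H(i := 0))"
    using left_run[of "CL2 i" i "nxt i" T2 "(H(i := 0))(i := 0 + Suc E)"] lft_CL2[of i] i nz2
    by (simp add: T2 tpB_def)
  have main: "arun (Suc (H i) + Suc E + 1 + Suc (Suc E)) (CL i, T, H) = (nxt i, T2, H(i := 0))"
    by (simp only: arun_add s1 s2 s3 s4)
  have eq: "H i + 2*E + 5 = Suc (H i) + Suc E + 1 + Suc (Suc E)" by simp
  show ?thesis by (simp only: eq main T2)
qed

lemma dec_Sym: "dec (Cell I v) = Sym a \<Longrightarrow> v = Sim (Sym a)"
  by (cases v) auto

lemma clean_zero:
  assumes d: "dirty (T 0) I E (H 0)" and oo: "tape_has_output (dec \<circ> T 0) y"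
  shows "arun (H 0 + 2*E + 6) (CL 0, T, H) = (nxt 0, T(0 := \<lambda>p. if p = 0 then CStart else
      Cell (I p) (if p \<le> length y then Sim (Sym (y!(p-1))) else Fresh)), H(0 := 0))"
proof -
  have T0: "T 0 0 = CStart" and Tc: "\<And>p. p > 0 \<Longrightarrow> \<exists>v. T 0 p = Cell (I p) v"
    and Tf: "\<And>p. p > 0 \<Longrightarrow> vof (T 0 p) = Fresh \<longleftrightarrow> E < p" using d by (auto simp: dirty_def)
  have nz: "\<forall>p>0. T 0 p \<noteq> CStart"
  proof (intro allI impI)
    fix p :: nat assume "p > 0"
    then obtain v where "T 0 p = Cell (I p) v" using Tc[of p] by auto
    then show "T 0 p \<noteq> CStart" by simp
  qed
  have ys: "T 0 p = Cell (I p) (Sim (Sym (y!(p-1))))" if th: "0 < p" "p \<le> length y" for p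
  proof -
    obtain v where v: "T 0 p = Cell (I p) v" using Tc[of p] th by auto
    have all: "\<forall>i<length y. dec (T 0 (Suc i)) = Sym (y ! i)" using oo unfolding tape_has_output_def by simp
    have "dec (T 0 (Suc (p - 1))) = Sym (y ! (p-1))" using all[rule_format, of "p - 1"] th by linarith
    moreover have "Suc (p - 1) = p" using th by simp
    ultimately have "dec (T 0 p) = Sym (y ! (p-1))" by simp
    then show ?thesis using v dec_Sym by simp
  qed
  have yE: "length y \<le> E"
  proof (cases "length y = 0")
    case False
    then have "vof (T 0 (length y)) \<noteq> Fresh" using ys[of "length y"] by simp
    then show ?thesis using Tf[of "length y"] False by simp
  qed simp
  obtain vb where vb: "T 0 (Suc (length y)) = Cell (I (Suc (length y))) vb" using Tc[of "Suc (length y)"] by auto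
  have nsym: "\<not> isSymCell (T 0 (Suc (length y)))"
  proof -
    have "dec (T 0 (Suc (length y))) = Blank" using oo unfolding tape_has_output_def by simp
    then show ?thesis using vb by (cases "T 0 (Suc (length y))" rule: isSymCell.cases) auto
  qed
  have s1: "arun (Suc (H 0)) (CL 0, T, H) = (CE 0 True, T, H(0 := 0))"
    using left_run[of "CL 0" 0 "CE 0 True" T H] lft_CL[of 0] k0 T0 nz by simp
  have P1: "T 0 x = CStart \<or> isSymCell (T 0 x)" if "0 \<le> x \<and> x < 0 + Suc (length y)" for x
  proof (cases "x = 0")
    case True then show ?thesis using T0 by simp
  next
    case False then show ?thesis using ys[of x] that by simp
  qed
  have s2': "arun (Suc (length y)) (CE 0 True, T, H(0 := 0)) = (CE 0 True, T, (H(0 := 0))(0 := 0 + Suc (length y)))"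
    apply (rule sweep_id[of 0 "CE 0 True" "\<lambda>c. c = CStart \<or> isSymCell c"])
    subgoal using k0 by simp
    subgoal by simp
    subgoal for rs using d_keep[of rs 0] by simp
    subgoal using P1 by blast
    subgoal by simp
    done
  then have s2: "arun (Suc (length y)) (CE 0 True, T, H(0 := 0)) = (CE 0 True, T, H(0 := Suc (length y)))"
    by simp
  have s3: "arun 1 (CE 0 True, T, H(0 := Suc (length y))) = (CE 0 False, T, H(0 := Suc (length y)))"
    unfolding arun_1 by (rule step_stay) (use k0 vb nsym in \<open>simp_all add: rdv_at\<close>)
  define T2 where "T2 = T(0 := \<lambda>x. if Suc (length y) \<le> x \<and> x < Suc (length y) + (E - length y) then eraseF (T 0 x) else T 0 x)"
  have P2: "T 0 x = CStart \<or> isSimCell (T 0 x)" if th: "Suc (length y) \<le> x \<and> x < Suc (length y) + (E - length y)" for x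
  proof -
    obtain v where v: "T 0 x = Cell (I x) v" using Tc[of x] th by auto
    have xE: "x \<le> E" "0 < x" using th yE by linarith+
    have "v \<noteq> Fresh" using Tf[of x] xE v by simp
    then show ?thesis using v by (cases v) auto
  qed
  have s4': "arun (E - length y) (CE 0 False, T, H(0 := Suc (length y))) = (CE 0 False, T2, (H(0 := Suc (length y)))(0 := Suc (length y) + (E - length y)))"
    unfolding T2_def
    apply (rule sweep[of 0 "CE 0 False" "\<lambda>c. c = CStart \<or> isSimCell c" eraseF])
    subgoal using k0 by simp
    subgoal by simp
    subgoal for rs by (rule d_erase)
    subgoal using P2 by blast
    subgoal by simp
    done
  have hE: "Suc (length y) + (E - length y) = Suc E" using yE by simp
  have s4: "arun (E - length y) (CE 0 False, T, H(0 := Suc (length y))) = (CE 0 False, T2, H(0 := Suc E))"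
    using s4' hE by simp
  have c5: "T2 0 (Suc E) = Cell (I (Suc E)) Fresh"
  proof -
    obtain v where v: "T 0 (Suc E) = Cell (I (Suc E)) v" using Tc[of "Suc E"] by auto
    then have "v = Fresh" using Tf[of "Suc E"] by simp
    then show ?thesis using v hE by (simp add: T2_def)
  qed
  have s5: "arun 1 (CE 0 False, T2, H(0 := Suc E)) = (CL2 0, T2, H(0 := Suc E))"
    unfolding arun_1 by (rule step_stay) (use k0 c5 in \<open>simp_all add: rdv_at\<close>)
  have T2: "T2 = T(0 := \<lambda>p. if p = 0 then CStart else
      Cell (I p) (if p \<le> length y then Sim (Sym (y!(p-1))) else Fresh))" (is "_ = T(0 := ?tp)")
  proof -
    have "T2 0 x = ?tp x" for x
    proof (cases "x = 0")
      case True then show ?thesis using T0 by (simp add: T2_def)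
    next
      case False
      then obtain v where v: "T 0 x = Cell (I x) v" using Tc[of x] by auto
      have "E < x \<Longrightarrow> v = Fresh" using Tf[of x] v False by simp
      then show ?thesis using v False ys[of x] hE by (auto simp: T2_def)
    qed
    then show ?thesis by (auto simp: fun_eq_iff T2_def)
  qed
  have nz2: "\<forall>p>0. T2 0 p \<noteq> CStart" unfolding T2 by simp
  have s6: "arun (Suc (Suc E)) (CL2 0, T2, H(0 := Suc E)) = (nxt 0, T2, H(0 := 0))"
    using left_run[of "CL2 0" 0 "nxt 0" T2 "H(0 := Suc E)"] lft_CL2[of 0] k0 nz2
    by (simp add: T2)
  have main: "arun (Suc (H 0) + Suc (length y) + 1 + (E - length y) + 1 + Suc (Suc E)) (CL 0, T, H) = (nxt 0, T2, H(0 := 0))"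
    by (simp only: arun_add s1 s2 s3 s4 s5 s6)
  have eq: "H 0 + 2*E + 6 = Suc (H 0) + Suc (length y) + 1 + (E - length y) + 1 + Suc (Suc E)" using yE by simp
  show ?thesis by (simp only: eq main T2)
qed

lemma clean_rest:
  "\<lbrakk>\<forall>j. i \<le> j \<and> j < k \<longrightarrow> (\<exists>E. dirty (T j) (\<lambda>_. NoIn) E (H j) \<and> E \<le> Em \<and> H j \<le> Hm); 0 < i; i < k\<rbrakk> \<Longrightarrow>
   \<exists>t \<le> (k - i) * (Hm + 2*Em + 5). arun t (CL i, T, H) =
      (Scan, \<lambda>j. if i \<le> j \<and> j < k then tpB else T j, \<lambda>j. if i \<le> j \<and> j < k then 0 else H j)"
proof (induction "k - i" arbitrary: i T H)
  case 0
  then show ?case by simp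
next
  case (Suc d)
  obtain E where E: "dirty (T i) (\<lambda>_. NoIn) E (H i)" "E \<le> Em" "H i \<le> Hm" using Suc.prems(1,3) by blast
  have s1: "arun (H i + 2*E + 5) (CL i, T, H) = (nxt i, T(i := tpB), H(i := 0))"
    using clean_other[of i T E H] Suc.prems E by simp
  have b1: "H i + 2*E + 5 \<le> Hm + 2*Em + 5" using E by simp
  show ?case
  proof (cases "Suc i < k")
    case True
    have IH: "\<exists>t \<le> (k - Suc i) * (Hm + 2*Em + 5). arun t (CL (Suc i), T(i := tpB), H(i := 0)) =
      (Scan, \<lambda>j. if Suc i \<le> j \<and> j < k then tpB else (T(i := tpB)) j, \<lambda>j. if Suc i \<le> j \<and> j < k then 0 else (H(i := 0)) j)"
      apply (rule Suc.hyps(1))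
      using Suc.hyps(2) Suc.prems True by auto
    then obtain t where t: "t \<le> (k - Suc i) * (Hm + 2*Em + 5)" "arun t (CL (Suc i), T(i := tpB), H(i := 0)) =
      (Scan, \<lambda>j. if Suc i \<le> j \<and> j < k then tpB else (T(i := tpB)) j, \<lambda>j. if Suc i \<le> j \<and> j < k then 0 else (H(i := 0)) j)"
      by blast
    have nx: "nxt i = CL (Suc i)" using True by (simp add: nxt_def)
    have r: "arun (H i + 2*E + 5 + t) (CL i, T, H) = (Scan, \<lambda>j. if Suc i \<le> j \<and> j < k then tpB else (T(i := tpB)) j, \<lambda>j. if Suc i \<le> j \<and> j < k then 0 else (H(i := 0)) j)"
      by (simp only: arun_add[of "H i + 2*E + 5" t] s1 nx t(2))
    have e1: "(\<lambda>j. if Suc i \<le> j \<and> j < k then tpB else (T(i := tpB)) j) = (\<lambda>j. if i \<le> j \<and> j < k then tpB else T j)"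
      using Suc.prems by (auto simp: fun_eq_iff)
    have e2: "(\<lambda>j. if Suc i \<le> j \<and> j < k then 0 else (H(i := 0)) j) = (\<lambda>j. if i \<le> j \<and> j < k then 0 else H j)"
      using Suc.prems by (auto simp: fun_eq_iff)
    have "(k - i) = Suc (k - Suc i)" using Suc.prems by simp
    then have bnd: "H i + 2*E + 5 + t \<le> (k - i) * (Hm + 2*Em + 5)" using b1 t(1) by simp
    show ?thesis unfolding e1[symmetric] e2[symmetric] using bnd r by blast
  next
    case False
    then have ki: "k = Suc i" using Suc.prems by simp
    have nx: "nxt i = Scan" using False by (simp add: nxt_def)
    have e1: "T(i := tpB) = (\<lambda>j. if i \<le> j \<and> j < k then tpB else T j)"
      using ki by (auto simp: fun_eq_iff)
    have e2: "H(i := 0) = (\<lambda>j. if i \<le> j \<and> j < k then 0 else H j)"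
      using ki by (auto simp: fun_eq_iff)
    have bnd: "H i + 2*E + 5 \<le> (k - i) * (Hm + 2*Em + 5)" using b1 ki by simp
    show ?thesis unfolding e1[symmetric] e2[symmetric] using bnd s1 nx by auto
  qed
qed

lemma clean_all:
  assumes d0: "dirty (T 0) I E0 (H 0)" "E0 \<le> Em" "H 0 \<le> Hm" and oo: "tape_has_output (dec \<circ> T 0) y"
    and dr: "\<forall>j. 0 < j \<and> j < k \<longrightarrow> (\<exists>E. dirty (T j) (\<lambda>_. NoIn) E (H j) \<and> E \<le> Em \<and> H j \<le> Hm)"
  shows "\<exists>t \<le> k * (Hm + 2*Em + 6). arun t (CL 0, T, H) =
      (Scan, \<lambda>j. if j = 0 then (\<lambda>p. if p = 0 then CStart else
          Cell (I p) (if p \<le> length y then Sim (Sym (y!(p-1))) else Fresh))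
        else if j < k then tpB else T j, \<lambda>j. if j < k then 0 else H j)"
proof -
  define tp where "tp = (\<lambda>p. if p = 0 then CStart else
          Cell (I p) (if p \<le> length y then Sim (Sym (y!(p-1))) else Fresh))"
  have s1: "arun (H 0 + 2*E0 + 6) (CL 0, T, H) = (nxt 0, T(0 := tp), H(0 := 0))"
    using clean_zero[of T I E0 H y, OF d0(1) oo] unfolding tp_def .
  have b1: "H 0 + 2*E0 + 6 \<le> Hm + 2*Em + 6" using d0 by simp
  show ?thesis
  proof (cases "1 < k")
    case True
    have "\<exists>t \<le> (k - 1) * (Hm + 2*Em + 5). arun t (CL 1, T(0 := tp), H(0 := 0)) =
      (Scan, \<lambda>j. if 1 \<le> j \<and> j < k then tpB else (T(0 := tp)) j, \<lambda>j. if 1 \<le> j \<and> j < k then 0 else (H(0 := 0)) j)"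
      by (rule clean_rest) (use dr True in auto)
    then obtain t where t: "t \<le> (k - 1) * (Hm + 2*Em + 5)" "arun t (CL 1, T(0 := tp), H(0 := 0)) =
      (Scan, \<lambda>j. if 1 \<le> j \<and> j < k then tpB else (T(0 := tp)) j, \<lambda>j. if 1 \<le> j \<and> j < k then 0 else (H(0 := 0)) j)"
      by blast
    have nx: "nxt 0 = CL 1" using True by (simp add: nxt_def)
    have r: "arun (H 0 + 2*E0 + 6 + t) (CL 0, T, H) = (Scan, \<lambda>j. if 1 \<le> j \<and> j < k then tpB else (T(0 := tp)) j, \<lambda>j. if 1 \<le> j \<and> j < k then 0 else (H(0 := 0)) j)"
      by (simp only: arun_add[of "H 0 + 2*E0 + 6" t] s1 nx t(2))
    have e1: "(\<lambda>j. if 1 \<le> j \<and> j < k then tpB else (T(0 := tp)) j) = (\<lambda>j. if j = 0 then tp else if j < k then tpB else T j)"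
      by (auto simp: fun_eq_iff)
    have e2: "(\<lambda>j. if 1 \<le> j \<and> j < k then 0 else (H(0 := 0)) j) = (\<lambda>j. if j < k then 0 else H j)"
      using True by (auto simp: fun_eq_iff)
    have "(k - 1) * (Hm + 2*Em + 5) \<le> (k - 1) * (Hm + 2*Em + 6)" by simp
    moreover have "k * (Hm + 2*Em + 6) = (Hm + 2*Em + 6) + (k - 1) * (Hm + 2*Em + 6)"
      using True by (cases k) auto
    ultimately have bnd: "H 0 + 2*E0 + 6 + t \<le> k * (Hm + 2*Em + 6)" using b1 t(1) by linarith
    show ?thesis unfolding tp_def[symmetric] e1[symmetric] e2[symmetric] using bnd r by blast
  next
    case False
    then have k1': "k = 1" using k1 by simp
    have nx: "nxt 0 = Scan" using False unfolding nxt_def by simp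
    have e1: "T(0 := tp) = (\<lambda>j. if j = 0 then tp else if j < k then tpB else T j)"
      using k1' by (auto simp: fun_eq_iff)
    have e2: "H(0 := 0) = (\<lambda>j. if j < k then 0 else H j)"
      using k1' by (auto simp: fun_eq_iff)
    have bnd: "H 0 + 2*E0 + 6 \<le> k * (Hm + 2*Em + 6)" using b1 k1' by simp
    show ?thesis unfolding tp_def[symmetric] e1[symmetric] e2[symmetric] using bnd s1 nx by auto
  qed
qed

end

context mach begin

definition srel :: "'g \<Rightarrow> (nat \<Rightarrow> nat \<Rightarrow> ('a,'g) cell) \<Rightarrow> (nat \<Rightarrow> nat) \<Rightarrow> nat \<Rightarrow>
    'g st \<times> (nat \<Rightarrow> nat \<Rightarrow> ('a,'g) cell) \<times> (nat \<Rightarrow> nat) \<Rightarrow> 'a tm_config \<Rightarrow> bool" where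
  "srel g T0 e0 t A C \<longleftrightarrow> (case A of (q, T, H) \<Rightarrow> case C of (cq, ts, hs) \<Rightarrow>
     q = SimS g cq \<and> cq \<in> tm_states (Ms g) \<and> length ts = k \<and> length hs = k \<and>
     (\<forall>i<k. ts!i = dec \<circ> T i \<and> hs!i = H i) \<and>
     (\<forall>i. k \<le> i \<longrightarrow> T i = T0 i \<and> H i = 0) \<and>
     (\<forall>i<k. \<forall>p. dec (T i p) \<in> tm_gamma UNIV (Ms g)) \<and>
     (\<forall>i<k. H i \<le> t \<and> (\<exists>E. E \<le> max (e0 i) t \<and> dirty (T i) (\<lambda>p. inpof (T0 i p)) E (H i))))"

lemma dirty_step:
  assumes d: "dirty tp I E h" and ht: "h \<le> t" and Et: "E \<le> max e t"
    and c1: "h > 0 \<Longrightarrow> \<exists>s. c = Cell (I h) (Sim s)" and c0: "h = 0 \<Longrightarrow> c = CStart"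
    and h': "h' \<le> h + 1"
  shows "\<exists>E'. E' \<le> max e (Suc t) \<and> dirty (tp(h := c)) I E' h'"
proof -
  define E' where "E' = (if h = Suc E then Suc E else E)"
  have hE: "h \<le> Suc E" using d by (simp add: dirty_def)
  have "dirty (tp(h := c)) I E' h'"
    unfolding dirty_def
  proof (intro conjI allI impI)
    show "(tp(h := c)) 0 = CStart" using d c0 by (cases "h = 0") (auto simp: dirty_def)
  next
    fix p :: nat assume p: "0 < p"
    show "\<exists>v. (tp(h := c)) p = Cell (I p) v"
    proof (cases "p = h")
      case True then show ?thesis using c1 p by auto
    next
      case False then show ?thesis using d p by (auto simp: dirty_def)
    qed
  next
    fix p :: nat assume p: "0 < p"
    show "vof ((tp(h := c)) p) = Fresh \<longleftrightarrow> E' < p"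
    proof (cases "p = h")
      case True
      then obtain s where "c = Cell (I h) (Sim s)" using c1 p by auto
      then show ?thesis using True hE by (auto simp: E'_def)
    next
      case False
      have "vof (tp p) = Fresh \<longleftrightarrow> E < p" using d p by (auto simp: dirty_def)
      then show ?thesis using False by (auto simp: E'_def)
    qed
  next
    show "h' \<le> E' + 1" using h' hE by (auto simp: E'_def)
  qed
  moreover have "E' \<le> max e (Suc t)" using Et ht by (auto simp: E'_def)
  ultimately show ?thesis by blast
qed

lemma tm_run_Suc: "tm_run M c (Suc t) = tm_step M (tm_run M c t)"
  by (simp add: tm_run_def)

lemma wfg: "g \<in> S \<Longrightarrow> wf_tm k UNIV (Ms g)" using wfM by blast

lemma sim_step:
  assumes g: "g \<in> S" and r: "srel g T0 e0 t (q, T, H) (cq, ts, hs)" and nh: "cq \<notin> tm_halt (Ms g)"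
  shows "srel g T0 e0 (Suc t) (astep (q, T, H)) (tm_step (Ms g) (cq, ts, hs))"
proof -
  have wf: "wf_tm k UNIV (Ms g)" using wfg[OF g] .
  have q: "q = SimS g cq" and cqs: "cq \<in> tm_states (Ms g)" and lts: "length ts = k" and lhs: "length hs = k"
    and tsT: "\<And>i. i < k \<Longrightarrow> ts!i = dec \<circ> T i" and hsH: "\<And>i. i < k \<Longrightarrow> hs!i = H i"
    and big: "\<And>i. k \<le> i \<Longrightarrow> T i = T0 i \<and> H i = 0"
    and gam: "\<And>i p. i < k \<Longrightarrow> dec (T i p) \<in> tm_gamma UNIV (Ms g)"
    and ext: "\<And>i. i < k \<Longrightarrow> H i \<le> t \<and> (\<exists>E. E \<le> max (e0 i) t \<and> dirty (T i) (\<lambda>p. inpof (T0 i p)) E (H i))"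
    using r unfolding srel_def by auto
  define rl where "rl = map (\<lambda>i. dec (rdv T H i)) [0..<k]"
  have rl2: "map (\<lambda>i. (ts ! i) (hs ! i)) [0..<k] = rl"
    unfolding rl_def by (auto simp: tsT hsH rdv_def)
  obtain q' wl ml where d: "tm_delta (Ms g) cq rl = (q', wl, ml)" by (metis prod_cases3)
  have tk: "tm_k (Ms g) = k" using wf by (simp add: wf_tm_def)
  have rlg: "set rl \<subseteq> tm_gamma UNIV (Ms g)" unfolding rl_def using gam by (auto simp: rdv_def)
  have W: "\<forall>q \<in> tm_states (Ms g) - tm_halt (Ms g). \<forall>rs.
        length rs = k \<and> set rs \<subseteq> tm_gamma UNIV (Ms g) \<longrightarrow>
        (case tm_delta (Ms g) q rs of (q', ws, ms) \<Rightarrow>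
           q' \<in> tm_states (Ms g) \<and> length ws = k \<and> length ms = k \<and>
           set ws \<subseteq> tm_gamma UNIV (Ms g) \<and> set ms \<subseteq> {-1, 0, 1} \<and>
           (\<forall>i<k. (ws ! i = Start \<longleftrightarrow> rs ! i = Start) \<and>
                  (rs ! i = Start \<longrightarrow> ms ! i \<noteq> -1)))"
    using wf unfolding wf_tm_def by (elim conjE) assumption
  have lrl: "length rl = k" by (simp add: rl_def)
  have "case tm_delta (Ms g) cq rl of (q', ws, ms) \<Rightarrow>
           q' \<in> tm_states (Ms g) \<and> length ws = k \<and> length ms = k \<and>
           set ws \<subseteq> tm_gamma UNIV (Ms g) \<and> set ms \<subseteq> {-1, 0, 1} \<and>
           (\<forall>i<k. (ws ! i = Start \<longleftrightarrow> rl ! i = Start) \<and>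
                  (rl ! i = Start \<longrightarrow> ms ! i \<noteq> -1))"
    using W[rule_format, of cq rl] cqs nh lrl rlg by (meson DiffI)
  then have ok: "simok g rl (q', wl, ml)" using d unfolding simok_def by simp
  have stp: "tm_step (Ms g) (cq, ts, hs) = (q', map (\<lambda>i. (ts!i)(hs!i := wl!i)) [0..<k],
       map (\<lambda>i. nat (int (hs!i) + ml!i)) [0..<k])"
    using nh d rl2 tk by (simp add: Let_def)
  define ws where "ws = (\<lambda>i. if i < k then (case rdv T H i of Cell I v \<Rightarrow> Cell I (Sim (wl!i)) | c \<Rightarrow> c) else rdv T H i)"
  have ast: "astep (q, T, H) = (SimS g q', \<lambda>i. if i < k then (T i)(H i := ws i) else T i,
       \<lambda>i. if i < k then nat (int (H i) + ml!i) else H i)"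
    using nh d ok q by (simp add: simstep_def rl_def[symmetric] halted_def Let_def fun_eq_iff ws_def)
  have okk: "length wl = k" "length ml = k" "set wl \<subseteq> tm_gamma UNIV (Ms g)" "set ml \<subseteq> {-1,0,1}"
    "\<And>i. i < k \<Longrightarrow> (wl!i = Start \<longleftrightarrow> rl!i = Start)" "q' \<in> tm_states (Ms g)"
    using ok by (auto simp: simok_def)
  have rli: "\<And>i. i < k \<Longrightarrow> rl ! i = dec (T i (H i))" by (simp add: rl_def rdv_def)
  have decws: "dec (ws i) = wl ! i" if i: "i < k" for i
  proof (cases "H i = 0")
    case True
    then have "T i (H i) = CStart" using ext[OF i] by (auto simp: dirty_def)
    then show ?thesis using okk(5)[OF i] rli[OF i] i by (simp add: ws_def rdv_def)
  next
    case False
    then obtain v where "T i (H i) = Cell (inpof (T0 i (H i))) v" using ext[OF i] by (auto simp: dirty_def)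
    then show ?thesis using i by (simp add: ws_def rdv_def)
  qed
  have mli: "\<And>i. i < k \<Longrightarrow> ml ! i \<in> {-1,0,1}" using okk(2,4) by (auto dest!: nth_mem)
  have wli: "\<And>i. i < k \<Longrightarrow> wl ! i \<in> tm_gamma UNIV (Ms g)" using okk(1,3) by (auto dest!: nth_mem)
  show ?thesis unfolding ast stp srel_def
  proof (simp only: prod.case, intro conjI allI impI)
    show "SimS g q' = SimS g q'" ..
    show "q' \<in> tm_states (Ms g)" using okk(6) .
    show "length (map (\<lambda>i. (ts!i)(hs!i := wl!i)) [0..<k]) = k" by simp
    show "length (map (\<lambda>i. nat (int (hs!i) + ml!i)) [0..<k]) = k" by simp
  next
    fix i assume i: "i < k"
    show "map (\<lambda>i. (ts!i)(hs!i := wl!i)) [0..<k] ! i = dec \<circ> (if i < k then (T i)(H i := ws i) else T i)"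
      using i decws[OF i] by (auto simp: tsT hsH fun_eq_iff)
    show "map (\<lambda>i. nat (int (hs!i) + ml!i)) [0..<k] ! i = (if i < k then nat (int (H i) + ml!i) else H i)"
      using i by (simp add: hsH)
  next
    fix i assume i: "k \<le> i"
    show "(if i < k then (T i)(H i := ws i) else T i) = T0 i" using i big by simp
    show "(if i < k then nat (int (H i) + ml!i) else H i) = 0" using i big by simp
  next
    fix i p assume i: "i < k"
    show "dec ((if i < k then (T i)(H i := ws i) else T i) p) \<in> tm_gamma UNIV (Ms g)"
      using i decws[OF i] wli[OF i] gam[OF i] by auto
  next
    fix i assume i: "i < k"
    have hl: "nat (int (H i) + ml!i) \<le> H i + 1" using mli[OF i] by auto
    then show "(if i < k then nat (int (H i) + ml!i) else H i) \<le> Suc t" using ext[OF i] i by simp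
    obtain E where E: "E \<le> max (e0 i) t" "dirty (T i) (\<lambda>p. inpof (T0 i p)) E (H i)" using ext[OF i] by blast
    have c1: "\<exists>s. ws i = Cell (inpof (T0 i (H i))) (Sim s)" if hp: "H i > 0"
    proof -
      obtain v where "T i (H i) = Cell (inpof (T0 i (H i))) v" using E(2) hp by (auto simp: dirty_def)
      then show ?thesis using i by (simp add: ws_def rdv_def)
    qed
    have c0: "ws i = CStart" if "H i = 0"
      using E(2) that i by (auto simp: dirty_def ws_def rdv_def)
    show "\<exists>E. E \<le> max (e0 i) (Suc t) \<and> dirty (if i < k then (T i)(H i := ws i) else T i)
        (\<lambda>p. inpof (T0 i p)) E (if i < k then nat (int (H i) + ml!i) else H i)"
      using dirty_step[OF E(2) _ E(1) c1 c0 hl] ext[OF i] i by simp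
  qed
qed

end

context mach begin

lemma sim_run:
  assumes g: "g \<in> S" and r0: "srel g T0 e0 0 A0 C0"
  shows "(\<forall>t'<t. fst (tm_run (Ms g) C0 t') \<notin> tm_halt (Ms g)) \<Longrightarrow>
     srel g T0 e0 t (arun t A0) (tm_run (Ms g) C0 t)"
proof (induction t)
  case 0 then show ?case using r0 by (simp add: tm_run_def)
next
  case (Suc t)
  obtain q T H where a: "arun t A0 = (q, T, H)" by (metis prod_cases3)
  obtain cq ts hs where c: "tm_run (Ms g) C0 t = (cq, ts, hs)" by (metis prod_cases3)
  have r: "srel g T0 e0 t (q, T, H) (cq, ts, hs)" using Suc a c by simp
  have nh: "cq \<notin> tm_halt (Ms g)" using Suc.prems c by (metis fst_conv lessI)
  show ?case using sim_step[OF g r nh] a c by (simp add: arun_Suc2 tm_run_Suc)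
qed

lemma halt_fix:
  assumes "fst (tm_run M c t) \<in> tm_halt M"
  shows "tm_run M c (t + d) = tm_run M c t"
proof (induction d)
  case 0 then show ?case by simp
next
  case (Suc d)
  obtain q ts hs where c: "tm_run M c t = (q, ts, hs)" by (metis prod_cases3)
  have "tm_run M c (t + Suc d) = tm_step M (tm_run M c t)" using Suc by (simp add: tm_run_Suc)
  also have "\<dots> = tm_run M c t" using c assms by simp
  finally show ?case .
qed

lemma init_srel:
  assumes g: "g \<in> S"
  shows "srel g (Tof gs m w) (\<lambda>i. if i = 0 then length w else 0) 0
     (SimS g (tm_start (Ms g)), Tof gs m w, \<lambda>i. 0) (tm_init (Ms g) w)"
proof -
  have wf: "wf_tm k UNIV (Ms g)" using wfg[OF g] .
  have tk: "tm_k (Ms g) = k" and st: "tm_start (Ms g) \<in> tm_states (Ms g)" using wf by (auto simp: wf_tm_def)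
  define ts where "ts = (\<lambda>i. if i = 0 then Start else if i \<le> length w then Sym (w ! (i - 1)) else Blank)
        # replicate (k - 1) (\<lambda>i. if i = 0 then Start else (Blank :: 'a tsym))"
  have ti: "tm_init (Ms g) w = (tm_start (Ms g), ts, replicate k 0)"
    by (simp add: tm_init_def tk ts_def)
  have lts: "length ts = k" using k1 by (simp add: ts_def)
  have tsi: "ts ! i = dec \<circ> Tof gs m w i" if i: "i < k" for i
  proof (cases i)
    case 0
    have "ts ! 0 = (\<lambda>i. if i = 0 then Start else if i \<le> length w then Sym (w ! (i - 1)) else Blank)"
      by (simp add: ts_def)
    moreover have "(\<lambda>i. if i = 0 then Start else if i \<le> length w then Sym (w ! (i - 1)) else Blank) = dec \<circ> Tof gs m w 0"
      by (simp add: fun_eq_iff Tof_def tp0_def)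
    ultimately show ?thesis using 0 by simp
  next
    case (Suc j)
    have "ts ! i = (\<lambda>i. if i = 0 then Start else (Blank :: 'a tsym))"
      using i Suc by (simp add: ts_def)
    moreover have "(\<lambda>i. if i = 0 then Start else (Blank :: 'a tsym)) = dec \<circ> Tof gs m w i"
      using Suc by (simp add: fun_eq_iff Tof_def tpB_def)
    ultimately show ?thesis by simp
  qed
  have gam: "dec (Tof gs m w i p) \<in> tm_gamma UNIV (Ms g)" for i p
    by (auto simp: Tof_def tp0_def tpB_def tm_gamma_def)
  have dir: "dirty (Tof gs m w i) (\<lambda>p. inpof (Tof gs m w i p)) (if i = 0 then length w else 0) 0" for i
    by (auto simp: dirty_def Tof_def tp0_def tpB_def)
  have dex: "\<exists>E. E \<le> max (if i = 0 then length w else 0) 0 \<and> dirty (Tof gs m w i) (\<lambda>p. inpof (Tof gs m w i p)) E 0" for i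
    by (rule exI[of _ "if i = 0 then length w else 0"]) (use dir in simp)
  show ?thesis unfolding srel_def ti using st lts tsi gam dex k1
    by (simp add: tk)
qed

lemma sim_phase:
  assumes g: "g \<in> S" and oo: "tm_outputs_within (Ms g) w y B"
  shows "\<exists>t1 T H. real t1 \<le> B \<and> arun (Suc t1) (SimS g (tm_start (Ms g)), Tof gs m w, \<lambda>i. 0) = (CL 0, T, H) \<and>
     (\<forall>i<k. H i \<le> t1 \<and> (\<exists>E. E \<le> max (if i = 0 then length w else 0) t1 \<and>
          dirty (T i) (\<lambda>p. inpof (Tof gs m w i p)) E (H i))) \<and>
     tape_has_output (dec \<circ> T 0) y \<and> (\<forall>i. k \<le> i \<longrightarrow> T i = Tof gs m w i \<and> H i = 0)"
proof -
  let ?M = "Ms g"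
  let ?C0 = "tm_init ?M w"
  let ?A0 = "(SimS g (tm_start (Ms g)), Tof gs m w, \<lambda>i. 0::nat)"
  have wf: "wf_tm k UNIV ?M" using wfg[OF g] .
  obtain t0 where t0: "real t0 \<le> B" and acc: "case tm_run ?M ?C0 t0 of (q, ts, hs) \<Rightarrow>
      q \<in> tm_accept ?M \<and> tape_has_output (hd ts) y"
    using oo unfolding tm_outputs_within_def by (elim exE conjE) (rule that; assumption)
  obtain q0 ts0 hs0 where c0: "tm_run ?M ?C0 t0 = (q0, ts0, hs0)" by (metis prod_cases3)
  have "q0 \<in> tm_accept ?M" using acc c0 by simp
  moreover have "tm_accept ?M \<subseteq> tm_halt ?M" using wf by (simp add: wf_tm_def)
  ultimately have h0: "fst (tm_run ?M ?C0 t0) \<in> tm_halt ?M" using c0 by auto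
  define t1 where "t1 = (LEAST t. fst (tm_run ?M ?C0 t) \<in> tm_halt ?M)"
  have h1: "fst (tm_run ?M ?C0 t1) \<in> tm_halt ?M" unfolding t1_def by (rule LeastI, rule h0)
  have t10: "t1 \<le> t0" unfolding t1_def by (rule Least_le, rule h0)
  have nb: "\<forall>t'<t1. fst (tm_run ?M ?C0 t') \<notin> tm_halt ?M" unfolding t1_def by (auto dest: not_less_Least)
  have same: "tm_run ?M ?C0 t0 = tm_run ?M ?C0 t1" using halt_fix[OF h1, of "t0 - t1"] t10 by simp
  have r: "srel g (Tof gs m w) (\<lambda>i. if i = 0 then length w else 0) t1 (arun t1 ?A0) (tm_run ?M ?C0 t1)"
    by (rule sim_run[OF g init_srel[OF g] ]) (use nb in auto)
  obtain q T H where a: "arun t1 ?A0 = (q, T, H)" by (metis prod_cases3)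
  obtain cq ts hs where c: "tm_run ?M ?C0 t1 = (cq, ts, hs)" by (metis prod_cases3)
  have rr: "srel g (Tof gs m w) (\<lambda>i. if i = 0 then length w else 0) t1 (q, T, H) (cq, ts, hs)" using r a c by simp
  have R: "q = SimS g cq \<and> cq \<in> tm_states (Ms g) \<and> length ts = k \<and> length hs = k \<and>
     (\<forall>i<k. ts!i = dec \<circ> T i \<and> hs!i = H i) \<and>
     (\<forall>i. k \<le> i \<longrightarrow> T i = Tof gs m w i \<and> H i = 0) \<and>
     (\<forall>i<k. \<forall>p. dec (T i p) \<in> tm_gamma UNIV (Ms g)) \<and>
     (\<forall>i<k. H i \<le> t1 \<and> (\<exists>E. E \<le> max (if i = 0 then length w else 0) t1 \<and>
         dirty (T i) (\<lambda>p. inpof (Tof gs m w i p)) E (H i)))"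
    using rr unfolding srel_def prod.case by assumption
  have q: "q = SimS g cq" using R by (elim conjE)
  have lts: "length ts = k" using R by (elim conjE)
  have ts0: "ts ! 0 = dec \<circ> T 0" using R k0 by blast
  have cqh: "cq \<in> tm_halt ?M" using h1 c by simp
  have step: "astep (q, T, H) = (CL 0, T, H)"
    by (rule step_stay) (use q cqh in auto)
  have out: "tape_has_output (dec \<circ> T 0) y"
  proof -
    have "tape_has_output (hd ts) y" using acc same c by simp
    moreover have "hd ts = ts ! 0" using lts k1 by (cases ts) auto
    ultimately show ?thesis using ts0 by simp
  qed
  have "arun (Suc t1) ?A0 = (CL 0, T, H)" using a step by (simp add: arun_Suc2)
  moreover have "\<forall>i<k. H i \<le> t1 \<and> (\<exists>E. E \<le> max (if i = 0 then length w else 0) t1 \<and>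
          dirty (T i) (\<lambda>p. inpof (Tof gs m w i p)) E (H i))" using R by blast
  moreover have "\<forall>i. k \<le> i \<longrightarrow> T i = Tof gs m w i \<and> H i = 0" using R by blast
  moreover have "real t1 \<le> B" using t0 t10 by linarith
  ultimately show ?thesis using out by (intro exI[of _ t1] exI[of _ T] exI[of _ H]) simp
qed

end

context mach begin

lemma round:
  assumes m: "m < length gs" and g: "gs!m \<in> S" and oo: "tm_outputs_within (Ms (gs!m)) w y B"
  shows "\<exists>t t1. real t1 \<le> B \<and> t \<le> 2*m + 4 + Suc t1 + k*(t1 + 2*(length w + t1) + 6) \<and>
     arun t (Scan, Tof gs m w, \<lambda>i. 0) = (Scan, Tof gs (Suc m) y, \<lambda>i. 0)"
proof -
  have s1: "arun (2*m+4) (Scan, Tof gs m w, \<lambda>i. 0) = (SimS (gs!m) (tm_start (Ms (gs!m))), Tof gs (Suc m) w, \<lambda>i. 0)"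
    by (rule scan_phase[OF m])
  obtain t1 T H where t1: "real t1 \<le> B"
    and s2: "arun (Suc t1) (SimS (gs!m) (tm_start (Ms (gs!m))), Tof gs (Suc m) w, \<lambda>i. 0) = (CL 0, T, H)"
    and ex: "\<forall>i<k. H i \<le> t1 \<and> (\<exists>E. E \<le> max (if i = 0 then length w else 0) t1 \<and>
          dirty (T i) (\<lambda>p. inpof (Tof gs (Suc m) w i p)) E (H i))"
    and out: "tape_has_output (dec \<circ> T 0) y"
    and big: "\<forall>i. k \<le> i \<longrightarrow> T i = Tof gs (Suc m) w i \<and> H i = 0"
    using sim_phase[OF g oo, of gs "Suc m"] by blast
  define I where "I = (\<lambda>p. inpof (Tof gs (Suc m) w 0 p))"
  obtain E0 where E0: "E0 \<le> max (length w) t1" "dirty (T 0) I E0 (H 0)" "H 0 \<le> t1"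
    using ex k0 unfolding I_def by fastforce
  have NoIn: "(\<lambda>p. inpof (Tof gs (Suc m) w j p)) = (\<lambda>_. NoIn)" if "j > 0" for j
    using that by (auto simp: fun_eq_iff Tof_def tpB_def)
  have dr: "\<forall>j. 0 < j \<and> j < k \<longrightarrow> (\<exists>E. dirty (T j) (\<lambda>_. NoIn) E (H j) \<and> E \<le> length w + t1 \<and> H j \<le> t1)"
  proof (intro allI impI)
    fix j assume j: "0 < j \<and> j < k"
    then obtain E where "E \<le> max 0 t1" "dirty (T j) (\<lambda>p. inpof (Tof gs (Suc m) w j p)) E (H j)" "H j \<le> t1"
      using ex by auto
    then show "\<exists>E. dirty (T j) (\<lambda>_. NoIn) E (H j) \<and> E \<le> length w + t1 \<and> H j \<le> t1"
      using NoIn[of j] j by auto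
  qed
  obtain t2 where t2: "t2 \<le> k * (t1 + 2*(length w + t1) + 6)"
    and s3: "arun t2 (CL 0, T, H) = (Scan, \<lambda>j. if j = 0 then (\<lambda>p. if p = 0 then CStart else
          Cell (I p) (if p \<le> length y then Sim (Sym (y!(p-1))) else Fresh))
        else if j < k then tpB else T j, \<lambda>j. if j < k then 0 else H j)"
    using clean_all[OF E0(2) _ E0(3) out dr] E0(1) by fastforce
  have fT: "(\<lambda>j. if j = 0 then (\<lambda>p. if p = 0 then CStart else
          Cell (I p) (if p \<le> length y then Sim (Sym (y!(p-1))) else Fresh))
        else if j < k then tpB else T j) = Tof gs (Suc m) y"
  proof -
    have "(\<lambda>p. if p = 0 then CStart else
          Cell (I p) (if p \<le> length y then Sim (Sym (y!(p-1))) else Fresh)) = tp0 gs (Suc m) y"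
      by (auto simp: fun_eq_iff I_def Tof_def tp0_def)
    moreover have "T j = tpB" if "k \<le> j" for j
    proof -
      have "j \<noteq> 0" using that k1 by simp
      then show ?thesis using big that by (simp add: Tof_def)
    qed
    ultimately show ?thesis by (auto simp: fun_eq_iff Tof_def)
  qed
  have fH: "(\<lambda>j. if j < k then 0 else H j) = (\<lambda>i. 0)" using big by (auto simp: fun_eq_iff)
  have "arun (2*m+4 + Suc t1 + t2) (Scan, Tof gs m w, \<lambda>i. 0) = (Scan, Tof gs (Suc m) y, \<lambda>i. 0)"
    using s3 unfolding arun_add[of "2*m+4 + Suc t1" t2] arun_add[of "2*m+4" "Suc t1"] s1 s2 fT fH .
  moreover have "2*m+4 + Suc t1 + t2 \<le> 2*m + 4 + Suc t1 + k*(t1 + 2*(length w + t1) + 6)" using t2 by simp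
  ultimately show ?thesis using t1 by blast
qed

lemma chain:
  assumes "\<forall>i<n. \<exists>t \<le> b. arun t (X i) = X (Suc i)"
  shows "j \<le> n \<Longrightarrow> \<exists>t \<le> j * b. arun t (X 0) = X j"
proof (induction j)
  case 0 then show ?case by (intro exI[of _ 0]) simp
next
  case (Suc j)
  obtain t where t: "t \<le> j * b" "arun t (X 0) = X j" using Suc by auto
  have "j < n" using Suc.prems by simp
  then obtain t' where t': "t' \<le> b" "arun t' (X j) = X (Suc j)" using assms by blast
  have "arun (t + t') (X 0) = X (Suc j)" by (simp add: arun_add t(2) t'(2))
  moreover have "t + t' \<le> Suc j * b" using t(1) t'(1) by simp
  ultimately show ?case by blast
qed

end

fun wseq :: "('g \<Rightarrow> 'a list \<Rightarrow> 'a list) \<Rightarrow> 'a list \<Rightarrow> 'g list \<Rightarrow> nat \<Rightarrow> 'a list" where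
  "wseq fs w0 gs 0 = w0"
| "wseq fs w0 gs (Suc j) = fs (gs!j) (wseq fs w0 gs j)"

lemma word_prod_Cons: "word_prod G (x # xs) = x \<otimes>\<^bsub>G\<^esub> word_prod G xs"
  by (simp add: word_prod_def)
lemma word_prod_Nil: "word_prod G [] = \<one>\<^bsub>G\<^esub>"
  by (simp add: word_prod_def)

lemma word_prod_carrier:
  assumes "group G" shows "set xs \<subseteq> carrier G \<Longrightarrow> word_prod G xs \<in> carrier G"
proof (induction xs)
  case Nil then show ?case using assms by (simp add: word_prod_Nil group.is_monoid monoid.one_closed)
next
  case (Cons a xs) then show ?case using assms by (simp add: word_prod_Cons group.is_monoid monoid.m_closed)
qed

lemma word_prod_snoc:
  assumes G: "group G" and x: "x \<in> carrier G"
  shows "set xs \<subseteq> carrier G \<Longrightarrow> word_prod G (xs @ [x]) = word_prod G xs \<otimes>\<^bsub>G\<^esub> x"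
proof (induction xs)
  case Nil then show ?case using G x by (simp add: word_prod_Nil word_prod_Cons group.is_monoid monoid.r_one monoid.l_one)
next
  case (Cons a xs)
  then have a: "a \<in> carrier G" and xs: "set xs \<subseteq> carrier G" by auto
  have "word_prod G ((a # xs) @ [x]) = a \<otimes>\<^bsub>G\<^esub> (word_prod G xs \<otimes>\<^bsub>G\<^esub> x)"
    using Cons xs by (simp add: word_prod_Cons)
  also have "\<dots> = (a \<otimes>\<^bsub>G\<^esub> word_prod G xs) \<otimes>\<^bsub>G\<^esub> x"
    using G a x word_prod_carrier[OF G xs] by (simp add: group.is_monoid monoid.m_assoc)
  finally show ?case by (simp add: word_prod_Cons)
qed

lemma word_length_le: "set xs \<subseteq> S \<Longrightarrow> word_length G S (word_prod G xs) \<le> length xs"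
  unfolding word_length_def by (rule Least_le) auto

lemma round_bound:
  fixes i n w P D t1 t kk :: nat
  assumes i: "i < n" and w: "w + 1 \<le> P*(n+1)" and t1: "t1 \<le> D*(w+1)"
    and t: "t \<le> 2*i + 4 + Suc t1 + kk*(t1 + 2*(w + t1) + 6)"
  shows "t \<le> (n+1) * (5 + D*P + kk*(3*D*P + 2*P + 6))"
proof -
  define N where "N = n + 1"
  have t1': "t1 \<le> D*P*N"
  proof -
    have "D*(w+1) \<le> D*(P*(n+1))" using mult_le_mono2[OF w, of D] .
    then show ?thesis using t1 unfolding N_def by (simp only: mult.assoc)
  qed
  have w': "w \<le> P*N" using w unfolding N_def by simp
  have a: "2*i + 5 \<le> 5*N" using i unfolding N_def by simp
  have b: "t1 + 2*(w + t1) + 6 \<le> 3*D*P*N + 2*P*N + 6*N"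
  proof -
    have "t1 + 2*(w + t1) + 6 = 3*t1 + 2*w + 6" by simp
    also have "\<dots> \<le> 3*(D*P*N) + 2*(P*N) + 6*N" using t1' w' unfolding N_def by simp
    finally show ?thesis by (simp add: mult.assoc)
  qed
  have c: "kk*(t1 + 2*(w + t1) + 6) \<le> kk*(3*D*P*N + 2*P*N + 6*N)" using b by (rule mult_le_mono2)
  have "t \<le> 5*N + D*P*N + kk*(3*D*P*N + 2*P*N + 6*N)" using t a t1' c by linarith
  also have "\<dots> = N * (5 + D*P + kk*(3*D*P + 2*P + 6))" by (simp add: algebra_simps)
  finally show ?thesis unfolding N_def .
qed

lemma total_bound:
  fixes n w0 A Q t tr wn :: nat
  assumes t: "tr \<le> n * ((n+1) * A)" and wn: "wn \<le> Q*(n+1)"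
  shows "(2*w0 + 4) + tr + (2*n + wn + 6) \<le> (2*w0 + 12 + A + Q) * (n+1)^2"
proof -
  define N where "N = n + 1"
  have N1: "1 \<le> N" unfolding N_def by simp
  have NN: "N \<le> N^2" using N1 by (simp add: power2_eq_square)
  have N2: "1 \<le> N^2" using N1 NN by linarith
  have "n * (N * A) \<le> N * (N * A)" unfolding N_def by simp
  then have "tr \<le> A * N^2" using t unfolding N_def by (simp add: power2_eq_square algebra_simps)
  moreover have "2*n + wn + 6 \<le> 6*N^2 + (2 + Q)*N^2"
  proof -
    have "2*n + wn \<le> (2 + Q) * N" using wn unfolding N_def by (simp add: algebra_simps)
    also have "\<dots> \<le> (2 + Q) * N^2" using NN by (rule mult_le_mono2)
    finally show ?thesis using N2 by linarith
  qed
  moreover have "2*w0 + 4 \<le> (2*w0 + 4) * N^2" using N2 by simp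
  ultimately have "(2*w0 + 4) + tr + (2*n + wn + 6) \<le> (2*w0 + 4) * N^2 + A * N^2 + (6*N^2 + (2 + Q)*N^2)"
    by linarith
  also have "\<dots> = (2*w0 + 12 + A + Q) * N^2" by (simp add: algebra_simps)
  finally show ?thesis unfolding N_def .
qed


theorem theorem1p6:
  fixes G :: "('g, 'm) monoid_scheme" (structure)
    and S :: "'g set"
    and L :: "'a::finite list set"
    and psi :: "'a list \<Rightarrow> 'g"
    and k :: nat
  assumes k: "k > 1"
    and grp: "group G"
    and finS: "finite S"
    and gen: "semigroup_generates G S"
    and bij: "bij_betw psi L (carrier G)"
    and lin: "\<forall>s \<in> S. \<exists>f. linear_time_computable k f \<and>
                 (\<forall>w \<in> L. f w \<in> L \<and> psi (f w) = psi w \<otimes> s)"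
    and qgeo: "\<exists>C > 0. \<forall>w \<in> L. real (length w) \<le> C * (real (word_length G S (psi w)) + 1)"
  shows "\<exists>(M :: ('a + 'g) tm) C. wf_tm k (Inl ` UNIV \<union> Inr ` S) M \<and> C > 0 \<and>
           (\<forall>gs. set gs \<subseteq> S \<longrightarrow>
              (\<exists>w \<in> L. psi w = word_prod G gs \<and>
                 tm_outputs_within M (map Inr gs) (map Inl w)
                   (C * (real (length gs) + 1) ^ 2)))"
proof -
  obtain fs where fs: "\<forall>s\<in>S. linear_time_computable k (fs s) \<and>
      (\<forall>w \<in> L. fs s w \<in> L \<and> psi (fs s w) = psi w \<otimes> s)"
    using bchoice[OF lin] by blast
  have "\<forall>s\<in>S. \<exists>p. wf_tm k (UNIV :: 'a set) (fst p) \<and> snd p > (0::real) \<and>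
        (\<forall>x. tm_outputs_within (fst p) x (fs s x) (snd p * (real (length x) + 1)))"
  proof
    fix s assume s: "s \<in> S"
    then have "linear_time_computable k (fs s)" using fs by blast
    then obtain M C where MC: "wf_tm k (UNIV :: 'a set) M" "C > 0"
       "\<forall>x. tm_outputs_within M x (fs s x) (C * (real (length x) + 1))"
      unfolding linear_time_computable_def by blast
    show "\<exists>p. wf_tm k (UNIV :: 'a set) (fst p) \<and> snd p > (0::real) \<and>
        (\<forall>x. tm_outputs_within (fst p) x (fs s x) (snd p * (real (length x) + 1)))"
      by (rule exI[of _ "(M, C)"]) (use MC in simp)
  qed
  from bchoice[OF this] obtain MC where MC: "\<forall>s\<in>S. wf_tm k (UNIV :: 'a set) (fst (MC s)) \<and> snd (MC s) > (0::real) \<and>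
        (\<forall>x. tm_outputs_within (fst (MC s)) x (fs s x) (snd (MC s) * (real (length x) + 1)))"
    by (elim exE) (rule that)
  define Ms where "Ms = (\<lambda>s. fst (MC s))"
  define Cs where "Cs = (\<lambda>s. snd (MC s))"
  have Ms: "\<And>s. s \<in> S \<Longrightarrow> wf_tm k UNIV (Ms s)" using MC by (simp add: Ms_def)
  have Cs0: "\<And>s. s \<in> S \<Longrightarrow> Cs s > 0" using MC by (simp add: Cs_def)
  have Mo: "\<And>s x. s \<in> S \<Longrightarrow> tm_outputs_within (Ms s) x (fs s x) (Cs s * (real (length x) + 1))"
    using MC by (simp add: Ms_def Cs_def)
  have one: "\<one> \<in> carrier G" using grp by (simp add: group.is_monoid monoid.one_closed)
  obtain w0 where w0: "w0 \<in> L" "psi w0 = \<one>"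
    using bij one unfolding bij_betw_def by (metis imageE)
  interpret mach k S Ms w0
    by unfold_locales (use k finS Ms in auto)
  obtain qe :: "'g st \<Rightarrow> nat" where qe: "inj_on qe Qset"
    using finite_imp_inj_to_nat_seg[OF finite_Qset] by blast
  obtain fc :: "('a,'g) cell \<Rightarrow> nat" where fc: "inj_on fc Gam"
    using finite_imp_inj_to_nat_seg[OF finite_Gam] by blast
  obtain Cq where Cq: "Cq > 0" "\<forall>w \<in> L. real (length w) \<le> Cq * (real (word_length G S (psi w)) + 1)"
    using qgeo by blast
  define D where "D = nat \<lceil>\<Sum>s\<in>S. Cs s\<rceil>"
  have CD: "Cs s \<le> real D" if s: "s \<in> S" for s
  proof -
    have "Cs s \<le> (\<Sum>s\<in>S. Cs s)" using s finS Cs0 by (intro member_le_sum) (auto intro: less_imp_le)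
    also have "\<dots> \<le> real D" unfolding D_def by linarith
    finally show ?thesis .
  qed
  define Q where "Q = nat \<lceil>Cq\<rceil>"
  define P where "P = Q + 1"
  define A where "A = 5 + D*P + k*(3*D*P + 2*P + 6)"
  define Ctot where "Ctot = 2 * length w0 + 12 + A + Q"
  have SG: "S \<subseteq> carrier G" using gen by (simp add: semigroup_generates_def)
  have main: "\<exists>w \<in> L. psi w = word_prod G gs \<and>
       tm_outputs_within (Mc qe fc) (map Inr gs) (map Inl w) (real Ctot * (real (length gs) + 1) ^ 2)"
    if gs: "set gs \<subseteq> S" for gs
  proof -
    define n where "n = length gs"
    define wq where "wq = wseq fs w0 gs"
    have wqL: "wq j \<in> L \<and> psi (wq j) = word_prod G (take j gs)" if "j \<le> n" for j
      using that
    proof (induction j)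
      case 0 then show ?case using w0 by (simp add: wq_def word_prod_Nil)
    next
      case (Suc j)
      then have IH: "wq j \<in> L" "psi (wq j) = word_prod G (take j gs)" by auto
      have jn: "j < length gs" using Suc.prems n_def by simp
      have gj: "gs ! j \<in> S" using gs jn by (auto dest: nth_mem)
      have tk: "take (Suc j) gs = take j gs @ [gs ! j]" using jn by (simp add: take_Suc_conv_app_nth)
      have st: "set (take j gs) \<subseteq> carrier G" using gs SG by (meson order.trans set_take_subset)
      have "wq (Suc j) = fs (gs!j) (wq j)" by (simp add: wq_def)
      then show ?case using fs gj IH tk word_prod_snoc[OF grp _ st] SG by auto
    qed
    have wqlen: "length (wq j) \<le> Q * (j + 1)" if "j \<le> n" for j
    proof -
      have "word_length G S (psi (wq j)) \<le> length (take j gs)"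
      proof -
        have "set (take j gs) \<subseteq> S" using gs set_take_subset by (metis order.trans)
        then show ?thesis using wqL[OF that] word_length_le[of "take j gs" S G] by simp
      qed
      then have wl: "real (word_length G S (psi (wq j))) \<le> real j" by simp
      have "real (length (wq j)) \<le> Cq * (real (word_length G S (psi (wq j))) + 1)" using Cq wqL[OF that] by blast
      also have "\<dots> \<le> Cq * (real j + 1)" using wl Cq(1) by (intro mult_left_mono) auto
      also have "\<dots> \<le> real Q * (real j + 1)" unfolding Q_def by (intro mult_right_mono) (auto simp: real_nat_ceiling_ge)
      finally have "real (length (wq j)) \<le> real (Q * (j + 1))" by (simp add: algebra_simps)
      then show ?thesis by (simp only: of_nat_le_iff)
    qed
    define X where "X = (\<lambda>i. (Scan :: 'g st, Tof gs i (wq i), \<lambda>_::nat. 0::nat))"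
    have rounds: "\<forall>i<n. \<exists>t \<le> (n+1)*A. arun t (X i) = X (Suc i)"
    proof (intro allI impI)
      fix i assume i: "i < n"
      have gi: "gs ! i \<in> S" using gs i n_def by (auto dest: nth_mem)
      have o: "tm_outputs_within (Ms (gs!i)) (wq i) (wq (Suc i)) (Cs (gs!i) * (real (length (wq i)) + 1))"
        using Mo[OF gi, of "wq i"] by (simp add: wq_def)
      obtain t t1 where tt: "real t1 \<le> Cs (gs!i) * (real (length (wq i)) + 1)"
        "t \<le> 2*i + 4 + Suc t1 + k*(t1 + 2*(length (wq i) + t1) + 6)"
        "arun t (Scan, Tof gs i (wq i), \<lambda>i. 0) = (Scan, Tof gs (Suc i) (wq (Suc i)), \<lambda>i. 0)"
        using round[OF _ gi o] i n_def by blast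
      have "real t1 \<le> real D * (real (length (wq i)) + 1)"
        using tt(1) CD[OF gi] by (meson mult_right_mono of_nat_0_le_iff order.trans add_nonneg_nonneg zero_le_one)
      then have "real t1 \<le> real (D * (length (wq i) + 1))" by (simp add: algebra_simps)
      then have t1: "t1 \<le> D * (length (wq i) + 1)" by (simp only: of_nat_le_iff)
      have wb: "length (wq i) + 1 \<le> P * (n + 1)"
      proof -
        have q1: "Q * (i + 1) \<le> Q * (n + 1)" using i by (intro mult_le_mono2) simp
        have "length (wq i) \<le> Q * (i + 1)" using wqlen[of i] i by simp
        then have "length (wq i) \<le> Q * (n + 1)" using q1 by (rule le_trans)
        then show ?thesis unfolding P_def by (simp add: algebra_simps)
      qed
      have "t \<le> (n+1) * A" unfolding A_def by (rule round_bound[OF i wb t1 tt(2)])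
      then show "\<exists>t \<le> (n+1)*A. arun t (X i) = X (Suc i)" using tt(3) unfolding X_def by blast
    qed
    obtain tr where tr: "tr \<le> n * ((n+1)*A)" "arun tr (X 0) = X n"
      using chain[OF rounds, of n] by blast
    have ini: "arun (2 * length w0 + 4) (Init 0, Tof gs 0 [], \<lambda>i. 0) = X 0"
      using init_phase[of gs] by (simp add: X_def wq_def)
    obtain T H where fin: "arun (2*n + length (wq n) + 6) (X n) = (Acc, T, H)"
      "tape_has_output (ecf fc \<circ> T 0) (map Inl (wq n))"
      using final_phase[OF n_def, of "wq n" fc] unfolding X_def by blast
    have run: "arun ((2 * length w0 + 4) + tr + (2*n + length (wq n) + 6)) (Init 0, Tof gs 0 [], \<lambda>i. 0) = (Acc, T, H)"
      by (simp only: arun_add[of "(2 * length w0 + 4) + tr" "2*n + length (wq n) + 6"]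
            arun_add[of "2 * length w0 + 4" tr] ini tr(2) fin(1))
    have bnd: "(2 * length w0 + 4) + tr + (2*n + length (wq n) + 6) \<le> Ctot * (n+1)^2"
      unfolding Ctot_def by (rule total_bound[OF tr(1) wqlen[of n, OF order.refl]])
    have rb: "real ((2 * length w0 + 4) + tr + (2*n + length (wq n) + 6)) \<le> real Ctot * (real (length gs) + 1) ^ 2"
    proof -
      have "real ((2 * length w0 + 4) + tr + (2*n + length (wq n) + 6)) \<le> real (Ctot * (n+1)^2)"
        using bnd by (simp only: of_nat_le_iff)
      then show ?thesis by (simp add: n_def add.commute)
    qed
    have "tm_outputs_within (Mc qe fc) (map Inr gs) (map Inl (wq n)) (real Ctot * (real (length gs) + 1) ^ 2)"
      by (rule outputs_conc[OF qe fc gs run fin(2) rb])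
    moreover have "wq n \<in> L" "psi (wq n) = word_prod G gs" using wqL[of n] n_def by auto
    ultimately show ?thesis by blast
  qed
  have wfM: "wf_tm k (Inl ` UNIV \<union> Inr ` S) (Mc qe fc)" using wf_Mc[OF qe fc] by (simp add: Bset_def)
  have C0: "real Ctot > 0" by (simp add: Ctot_def)
  show ?thesis using wfM C0 main by blast
qed


end
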